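(* Let $I=[0,1]$, let $C$ be a Cantor set and let $M$ be an M-Cantorval. For each of the sets: a one-point set, $I$, $C$, $M$, $I\times I$, $I\times C$, $I\times M$, $C\times M$, $M\times M$, there exists a sequence $(v_n)$ in $\mathbb R^2$ with $\sum_n v_n$ absolutely convergent such that the achievement set $E(v_n)$ is homeomorphic to that set.
   Context: For an absolutely convergent series $\sum_n v_n$ in $\mathbb R^d$, its achievement set is $E(v_n)=\{\sum_{n=1}^\infty \varepsilon_n v_n : (\varepsilon_n)\in\{0,1\}^{\mathbb N}\}$. A Cantor set is a nonempty, totally disconnected, perfect, compact subset of $\mathbb R^n$. An M-Cantorval is a nonempty compact set $M\subset\mathbb R$ which is regularly closed (equal to the closure of its interior) and such that both endpoints of every maximal interval $J\subset M$ are accumulation points of $M\setminus J$. *)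

theory Defs
  imports "HOL-Analysis.Analysis"
begin

definition achievement_set :: "(nat \<Rightarrow> 'a::real_normed_vector) \<Rightarrow> 'a set" where
  "achievement_set v = {(\<Sum>n. (if e n then 1 else 0) *\<^sub>R v n) | e :: nat \<Rightarrow> bool. True}"

definition totally_disconnected :: "'a::topological_space set \<Rightarrow> bool" where
  "totally_disconnected S \<longleftrightarrow> (\<forall>T. T \<subseteq> S \<and> connected T \<longrightarrow> (\<exists>a. T \<subseteq> {a}))"

definition perfect_set :: "'a::topological_space set \<Rightarrow> bool" where
  "perfect_set S \<longleftrightarrow> closed S \<and> (\<forall>x\<in>S. x islimpt S)"

definition cantor_set :: "'a::topological_space set \<Rightarrow> bool" where
  "cantor_set S \<longleftrightarrow> S \<noteq> {} \<and> totally_disconnected S \<and> perfect_set S \<and> compact S"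

definition maximal_interval :: "real set \<Rightarrow> real set \<Rightarrow> bool" where
  "maximal_interval J M \<longleftrightarrow> J \<noteq> {} \<and> is_interval J \<and> J \<subseteq> M \<and>
     (\<forall>K. is_interval K \<and> J \<subseteq> K \<and> K \<subseteq> M \<longrightarrow> K = J)"

definition m_cantorval :: "real set \<Rightarrow> bool" where
  "m_cantorval M \<longleftrightarrow> M \<noteq> {} \<and> compact M \<and> closure (interior M) = M \<and>
     (\<forall>J. maximal_interval J M \<longrightarrow> (Inf J) islimpt (M - J) \<and> (Sup J) islimpt (M - J))"

definition realizable_in_plane :: "'a::topological_space set \<Rightarrow> bool" where
  "realizable_in_plane S \<longleftrightarrow>
     (\<exists>v :: nat \<Rightarrow> real \<times> real. summable (\<lambda>n. norm (v n)) \<and> achievement_set v homeomorphic S)"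

end

theory Submission imports Defs begin

definition asum :: "(nat \<Rightarrow> 'a::real_normed_vector) \<Rightarrow> (nat \<Rightarrow> bool) \<Rightarrow> 'a" where
 "asum v e = (\<Sum>n. (if e n then 1 else 0) *\<^sub>R v n)"

lemma achievement_set_eq: "achievement_set v = range (asum v)"
  by (auto simp: achievement_set_def asum_def)

lemma summable_sel:
  fixes v :: "nat \<Rightarrow> 'a::banach"
  assumes "summable (\<lambda>n. norm (v n))"
  shows "summable (\<lambda>n. (if e n then 1 else 0) *\<^sub>R v n)"
  by (rule summable_norm_cancel, rule summable_comparison_test[OF _ assms]) auto

lemma cont_bool_fun: "continuous_on (UNIV::bool set) f"
  unfolding continuous_on_topological
  by (metis open_discrete singletonI singletonD)

lemma continuous_asum:
  fixes v :: "nat \<Rightarrow> 'a::banach"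
  assumes "summable (\<lambda>n. norm (v n))"
  shows "continuous_on UNIV (asum v)"
proof -
  have uc: "uniformly_convergent_on UNIV (\<lambda>N e. \<Sum>i<N. (if e i then 1 else 0) *\<^sub>R v i)"
    by (rule Weierstrass_m_test'[OF _ assms]) auto
  have ul: "uniform_limit UNIV (\<lambda>N e. \<Sum>i<N. (if e i then 1 else 0) *\<^sub>R v i) (asum v) sequentially"
    unfolding asum_def by (rule uniform_limit_suminf[OF uc])
  have ci: "continuous_on UNIV (\<lambda>e::nat\<Rightarrow>bool. (if e i then 1 else 0::real))" for i
  proof -
    have "continuous_on UNIV ((\<lambda>b::bool. if b then 1 else (0::real)) \<circ> (\<lambda>e. e i))"
      by (rule continuous_on_compose) (auto intro: cont_bool_fun)
    then show ?thesis by (simp add: o_def)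
  qed
  have c: "continuous_on UNIV (\<lambda>e::nat\<Rightarrow>bool. \<Sum>i<N. (if e i then 1 else 0) *\<^sub>R v i)" for N
    by (intro continuous_on_sum continuous_on_scaleR ci continuous_on_const)
  show ?thesis
    by (rule uniform_limit_theorem[OF always_eventually[OF allI[OF c]] ul]) simp
qed

lemma compact_cantor_space: "compact (UNIV :: (nat \<Rightarrow> bool) set)"
proof -
  have "compact_space (product_topology (\<lambda>i::nat. (euclidean :: bool topology)) UNIV)"
  proof -
    have "compact_space (euclidean::bool topology)"
      by (simp add: compact_space_def compactin_euclidean_iff finite_imp_compact)
    then show ?thesis by (simp add: compact_space_product_topology)
  qed
  then show ?thesis
    by (simp add: euclidean_product_topology compact_space_def compactin_euclidean_iff)
qed

lemma compact_achievement_set: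
  fixes v :: "nat \<Rightarrow> 'a::banach"
  assumes "summable (\<lambda>n. norm (v n))"
  shows "compact (achievement_set v)"
  unfolding achievement_set_eq
  by (rule compact_continuous_image[OF continuous_asum[OF assms] compact_cantor_space])

lemma sums_Pair: "f sums a \<Longrightarrow> g sums b \<Longrightarrow> (\<lambda>n. (f n, g n)) sums (a, b)"
proof -
  assume "f sums a" "g sums b"
  then have "(\<lambda>n. (sum f {..<n}, sum g {..<n})) \<longlonglongrightarrow> (a,b)"
    unfolding sums_def by (rule tendsto_Pair)
  moreover have "(\<Sum>i<n. (f i, g i)) = (sum f {..<n}, sum g {..<n})" for n
    by (induct n) (auto simp: zero_prod_def)
  ultimately show ?thesis unfolding sums_def by simp
qed

lemma sums_even: "a sums s \<Longrightarrow> (\<lambda>n. if even n then a (n div 2) else 0) sums s"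
  by (subst sums_mono_reindex[of "\<lambda>n. 2*n", symmetric]) (auto simp: strict_mono_def elim!: oddE)

lemma sums_odd: "a sums s \<Longrightarrow> (\<lambda>n. if odd n then a (n div 2) else 0) sums s"
  apply (subst sums_mono_reindex[of "\<lambda>n. 2*n+1", symmetric])
    apply (auto simp: strict_mono_def)
  by (metis oddE add.commute plus_1_eq_Suc rangeI)

definition interl :: "(nat \<Rightarrow> real) \<Rightarrow> (nat \<Rightarrow> real) \<Rightarrow> nat \<Rightarrow> real \<times> real" where
  "interl x y n = (if even n then (x (n div 2), 0) else (0, y (n div 2)))"

lemma sel_sums:
  fixes x :: "nat \<Rightarrow> 'a::banach"
  assumes "summable (\<lambda>n. norm (x n))"
  shows "(\<lambda>n. (if e n then 1 else 0) *\<^sub>R x n) sums asum x e"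
  unfolding asum_def using summable_sel[OF assms] by (simp add: summable_sums)

lemma interl_summable:
  assumes "summable (\<lambda>n. norm (x n))" "summable (\<lambda>n. norm (y n))"
  shows "summable (\<lambda>n. norm (interl x y n))"
proof -
  have "(\<lambda>n. (if even n then norm (x (n div 2)) else 0) + (if odd n then norm (y (n div 2)) else 0))
     sums ((\<Sum>n. norm (x n)) + (\<Sum>n. norm (y n)))"
    by (intro sums_add sums_even sums_odd summable_sums assms)
  moreover have "norm (interl x y n) = (if even n then norm (x (n div 2)) else 0) + (if odd n then norm (y (n div 2)) else 0)" for n
    by (auto simp: interl_def)
  ultimately show ?thesis by (simp add: sums_iff)
qed

lemma interl_asum:
  assumes "summable (\<lambda>n. norm (x n))" "summable (\<lambda>n. norm (y n))"
  shows "asum (interl x y) e = (asum x (\<lambda>k. e (2*k)), asum y (\<lambda>k. e (2*k+1)))"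
proof -
  let ?A = "\<lambda>k. ((if e (2*k) then 1 else 0) *\<^sub>R x k, 0::real)"
  let ?B = "\<lambda>k. (0::real, (if e (2*k+1) then 1 else 0) *\<^sub>R y k)"
  have "?A sums (asum x (\<lambda>k. e (2*k)), 0)"
    by (rule sums_Pair[OF sel_sums[OF assms(1)]]) simp
  moreover have "?B sums (0, asum y (\<lambda>k. e (2*k+1)))"
    by (rule sums_Pair[OF _ sel_sums[OF assms(2)]]) simp
  ultimately have "(\<lambda>n. (if even n then ?A (n div 2) else 0) + (if odd n then ?B (n div 2) else 0))
      sums ((asum x (\<lambda>k. e (2*k)), 0) + (0, asum y (\<lambda>k. e (2*k+1))))"
    by (intro sums_add sums_even sums_odd)
  moreover have "(if even n then ?A (n div 2) else 0) + (if odd n then ?B (n div 2) else 0)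
      = (if e n then 1 else 0) *\<^sub>R interl x y n" for n
    by (auto simp: interl_def elim!: evenE oddE)
  ultimately have "(\<lambda>n. (if e n then 1 else 0) *\<^sub>R interl x y n) sums (asum x (\<lambda>k. e (2*k)), asum y (\<lambda>k. e (2*k+1)))"
    by simp
  then show ?thesis unfolding asum_def by (simp add: sums_iff)
qed

lemma achievement_interl:
  assumes "summable (\<lambda>n. norm (x n))" "summable (\<lambda>n. norm (y n))"
  shows "achievement_set (interl x y) = achievement_set x \<times> achievement_set y"
proof -
  have "achievement_set (interl x y) \<subseteq> achievement_set x \<times> achievement_set y"
    unfolding achievement_set_eq using interl_asum[OF assms] by auto
  moreover have "achievement_set x \<times> achievement_set y \<subseteq> achievement_set (interl x y)"
  proof
    fix p assume "p \<in> achievement_set x \<times> achievement_set y"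
    then obtain e1 e2 where p: "p = (asum x e1, asum y e2)" unfolding achievement_set_eq by auto
    define e where "e n = (if even n then e1 (n div 2) else e2 (n div 2))" for n
    have "asum (interl x y) e = p"
      using interl_asum[OF assms, of e] p by (simp add: e_def)
    then show "p \<in> achievement_set (interl x y)" unfolding achievement_set_eq by (metis rangeI)
  qed
  ultimately show ?thesis by blast
qed

lemma realizable_hom: "realizable_in_plane S \<Longrightarrow> S homeomorphic T \<Longrightarrow> realizable_in_plane T"
  unfolding realizable_in_plane_def by (meson homeomorphic_trans)

lemma realizable_prod:
  fixes x y :: "nat \<Rightarrow> real"
  assumes "summable (\<lambda>n. norm (x n))" "summable (\<lambda>n. norm (y n))"
  shows "realizable_in_plane (achievement_set x \<times> achievement_set y)"
  unfolding realizable_in_plane_def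
  using achievement_interl[OF assms] interl_summable[OF assms] homeomorphic_refl by metis

lemma zero_seq_ach: "achievement_set (\<lambda>n. 0::real) = {0}"
  by (auto simp: achievement_set_def)

lemma realizable_line:
  fixes x :: "nat \<Rightarrow> real"
  assumes "summable (\<lambda>n. norm (x n))"
  shows "realizable_in_plane (achievement_set x)"
proof -
  have "realizable_in_plane (achievement_set x \<times> {0::real})"
    using realizable_prod[OF assms, of "\<lambda>n. 0"] by (simp add: zero_seq_ach)
  moreover have "(achievement_set x \<times> {0::real}) homeomorphic achievement_set x"
    unfolding homeomorphic_def homeomorphism_def
    by (rule exI[of _ fst], rule exI[of _ "\<lambda>t. (t,0)"]) (auto intro!: continuous_intros)
  ultimately show ?thesis by (rule realizable_hom)
qed

lemma homeomorphic_Times':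
  fixes S :: "'a::topological_space set" and S' :: "'b::topological_space set"
    and T :: "'c::topological_space set" and T' :: "'d::topological_space set"
  assumes "S homeomorphic S'" "T homeomorphic T'"
  shows "(S \<times> T) homeomorphic (S' \<times> T')"
proof -
  obtain f g where fg: "homeomorphism S S' f g" using assms(1) by (auto simp: homeomorphic_def)
  obtain h k where hk: "homeomorphism T T' h k" using assms(2) by (auto simp: homeomorphic_def)
  have "homeomorphism (S \<times> T) (S' \<times> T') (\<lambda>p. (f (fst p), h (snd p))) (\<lambda>p. (g (fst p), k (snd p)))"
    using fg hk unfolding homeomorphism_def
    apply (intro conjI)
    apply (auto intro!: continuous_intros continuous_on_compose2[where f=fst] continuous_on_compose2[where f=snd] simp: image_iff)
    done
  then show ?thesis by (auto simp: homeomorphic_def)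
qed

section \<open>Strictly increasing surjections between compact sets are continuous\<close>

lemma mono_surj_cont_left:
  fixes f :: "real \<Rightarrow> real"
  assumes K': "closed K'" and mono: "\<And>x y. x \<in> K \<Longrightarrow> y \<in> K \<Longrightarrow> x < y \<Longrightarrow> f x < f y"
    and img: "f ` K = K'" and x: "x \<in> K" and e: "e > 0"
  shows "\<exists>dl>0. \<forall>x'\<in>K. x - dl < x' \<and> x' \<le> x \<longrightarrow> f x - e < f x'"
proof (cases "{x'\<in>K. x' < x \<and> f x' \<le> f x - e} = {}")
  case True
  show ?thesis
  proof (intro exI[of _ 1] conjI ballI impI)
    fix x' assume "x' \<in> K" "x - 1 < x' \<and> x' \<le> x"
    then show "f x - e < f x'" using True e by (cases "x' = x") force+
  qed simp
next
  case False
  define A where "A = {x'\<in>K. x' < x \<and> f x' \<le> f x - e}"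
  have Ane: "f ` A \<noteq> {}" using False A_def by auto
  have bdd: "bdd_above (f ` A)" unfolding A_def by (rule bdd_aboveI[of _ "f x - e"]) auto
  define w where "w = Sup (f ` A)"
  have "w \<in> closure (f ` A)" unfolding w_def by (rule closure_contains_Sup[OF Ane bdd])
  moreover have "closure (f ` A) \<subseteq> K'" using img A_def K' by (intro closure_minimal) auto
  ultimately have "w \<in> K'" by auto
  have wle: "w \<le> f x - e" unfolding w_def using Ane by (intro cSup_least) (auto simp: A_def)
  have "w \<in> f ` K" using \<open>w \<in> K'\<close> img by simp
  then obtain z where z: "z \<in> K" "w = f z" by auto
  have zx: "z < x"
  proof (rule ccontr)
    assume "\<not> z < x"
    then have "x \<le> z" by simp
    then have "f x \<le> f z" using mono[OF x z(1)] by (cases "x = z") auto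
    then show False using wle z e by simp
  qed
  show ?thesis
  proof (intro exI[of _ "x - z"] conjI ballI impI)
    fix x' assume x': "x' \<in> K" "x - (x - z) < x' \<and> x' \<le> x"
    show "f x - e < f x'"
    proof (rule ccontr)
      assume "\<not> f x - e < f x'"
      then have le: "f x' \<le> f x - e" by simp
      then have "x' \<noteq> x" using e by auto
      then have "x' \<in> A" using x' le A_def by auto
      then have "f x' \<le> w" unfolding w_def using bdd by (intro cSup_upper) auto
      moreover have "f z < f x'" using mono[OF z(1) x'(1)] x' by auto
      ultimately show False using z by simp
    qed
  qed (use zx in simp)
qed

lemma mono_surj_cont_right:
  fixes f :: "real \<Rightarrow> real"
  assumes K': "closed K'" and mono: "\<And>x y. x \<in> K \<Longrightarrow> y \<in> K \<Longrightarrow> x < y \<Longrightarrow> f x < f y"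
    and img: "f ` K = K'" and x: "x \<in> K" and e: "e > 0"
  shows "\<exists>dr>0. \<forall>x'\<in>K. x \<le> x' \<and> x' < x + dr \<longrightarrow> f x' < f x + e"
proof (cases "{x'\<in>K. x < x' \<and> f x + e \<le> f x'} = {}")
  case True
  show ?thesis
  proof (intro exI[of _ 1] conjI ballI impI)
    fix x' assume "x' \<in> K" "x \<le> x' \<and> x' < x + 1"
    then show "f x' < f x + e" using True e by (cases "x' = x") force+
  qed simp
next
  case False
  define A where "A = {x'\<in>K. x < x' \<and> f x + e \<le> f x'}"
  have Ane: "f ` A \<noteq> {}" using False A_def by auto
  have bdd: "bdd_below (f ` A)" unfolding A_def by (rule bdd_belowI[of _ "f x + e"]) auto
  define w where "w = Inf (f ` A)"
  have "w \<in> closure (f ` A)" unfolding w_def by (rule closure_contains_Inf[OF Ane bdd])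
  moreover have "closure (f ` A) \<subseteq> K'" using img A_def K' by (intro closure_minimal) auto
  ultimately have "w \<in> K'" by auto
  have wle: "f x + e \<le> w" unfolding w_def using Ane by (intro cInf_greatest) (auto simp: A_def)
  have "w \<in> f ` K" using \<open>w \<in> K'\<close> img by simp
  then obtain z where z: "z \<in> K" "w = f z" by auto
  have zx: "x < z"
  proof (rule ccontr)
    assume "\<not> x < z"
    then have "z \<le> x" by simp
    then have "f z \<le> f x" using mono[OF z(1) x] by (cases "x = z") auto
    then show False using wle z e by simp
  qed
  show ?thesis
  proof (intro exI[of _ "z - x"] conjI ballI impI)
    fix x' assume x': "x' \<in> K" "x \<le> x' \<and> x' < x + (z - x)"
    show "f x' < f x + e"
    proof (rule ccontr)
      assume "\<not> f x' < f x + e"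
      then have le: "f x + e \<le> f x'" by simp
      then have "x' \<noteq> x" using e by auto
      then have "x' \<in> A" using x' le A_def by auto
      then have "w \<le> f x'" unfolding w_def using bdd by (intro cInf_lower) auto
      moreover have "f x' < f z" using mono[OF x'(1) z(1)] x' by auto
      ultimately show False using z by simp
    qed
  qed (use zx in simp)
qed

lemma mono_surj_cont:
  fixes f :: "real \<Rightarrow> real"
  assumes K': "closed K'" and mono: "\<And>x y. x \<in> K \<Longrightarrow> y \<in> K \<Longrightarrow> x < y \<Longrightarrow> f x < f y"
    and img: "f ` K = K'"
  shows "continuous_on K f"
  unfolding continuous_on_iff
proof (intro ballI allI impI)
  fix x e :: real assume x: "x \<in> K" and e: "e > 0"
  obtain dl where dl: "dl > 0" "\<forall>x'\<in>K. x - dl < x' \<and> x' \<le> x \<longrightarrow> f x - e < f x'"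
    using mono_surj_cont_left[OF K' mono img x e] by blast
  obtain dr where dr: "dr > 0" "\<forall>x'\<in>K. x \<le> x' \<and> x' < x + dr \<longrightarrow> f x' < f x + e"
    using mono_surj_cont_right[OF K' mono img x e] by blast
  show "\<exists>d>0. \<forall>x'\<in>K. dist x' x < d \<longrightarrow> dist (f x') (f x) < e"
  proof (intro exI[of _ "min dl dr"] conjI ballI impI)
    fix x' assume x': "x' \<in> K" "dist x' x < min dl dr"
    show "dist (f x') (f x) < e"
    proof (cases "x' \<le> x")
      case True
      then have "f x - e < f x'" using dl x' by (auto simp: dist_real_def)
      moreover have "f x' \<le> f x" using True mono[OF x'(1) x] by (cases "x' = x") auto
      ultimately show ?thesis by (simp add: dist_real_def)
    next
      case False
      then have "f x' < f x + e" using dr x' by (auto simp: dist_real_def)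
      moreover have "f x \<le> f x'" using False mono[OF x x'(1)] by auto
      ultimately show ?thesis by (simp add: dist_real_def)
    qed
  qed (use dl dr in simp)
qed

lemma mono_surj_homeomorphic:
  fixes f :: "real \<Rightarrow> real"
  assumes "compact K" "compact K'" and mono: "\<And>x y. x \<in> K \<Longrightarrow> y \<in> K \<Longrightarrow> x < y \<Longrightarrow> f x < f y"
    and img: "f ` K = K'"
  shows "K homeomorphic K'"
proof -
  have "continuous_on K f" by (rule mono_surj_cont[OF compact_imp_closed[OF assms(2)] mono img])
  moreover have "inj_on f K"
    unfolding inj_on_def by (metis mono linorder_neqE_linordered_idom less_irrefl)
  ultimately show ?thesis unfolding homeomorphic_def using homeomorphism_compact[OF assms(1) _ img] by blast
qed

section \<open>Abstract binary trees of cuts and gaps\<close>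

definition is_path :: "(nat \<Rightarrow> bool list) \<Rightarrow> bool" where
  "is_path ns \<longleftrightarrow> ns 0 = [] \<and> (\<forall>n. \<exists>\<beta>. ns (Suc n) = \<beta> # ns n)"

definition tree_ok :: "real set \<Rightarrow> (bool list \<Rightarrow> real) \<Rightarrow> (bool list \<Rightarrow> real) \<Rightarrow>
    (bool list \<Rightarrow> real) \<Rightarrow> (bool list \<Rightarrow> real) \<Rightarrow> bool" where
  "tree_ok K a b c d \<longleftrightarrow> (\<forall>s. a s \<in> K \<and> b s \<in> K \<and> a s < c s \<and> c s \<le> d s \<and> d s < b s \<and>
        (\<forall>x\<in>K. \<not> (c s < x \<and> x < d s)) \<and>
        a (False # s) = a s \<and> b (False # s) = c s \<and> a (True # s) = d s \<and> b (True # s) = b s)"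

definition is_tree :: "real set \<Rightarrow> (bool list \<Rightarrow> real) \<Rightarrow> (bool list \<Rightarrow> real) \<Rightarrow>
    (bool list \<Rightarrow> real) \<Rightarrow> (bool list \<Rightarrow> real) \<Rightarrow> bool" where
  "is_tree K a b c d \<longleftrightarrow> K \<subseteq> {a []..b []} \<and> tree_ok K a b c d \<and>
     (\<forall>ns. is_path ns \<longrightarrow> (\<lambda>n. b (ns n) - a (ns n)) \<longlonglongrightarrow> 0)"

lemma path_step:
  assumes "is_path ns" obtains \<beta> where "ns (Suc n) = \<beta> # ns n"
  using assms unfolding is_path_def by blast

lemma tree_facts:
  assumes "tree_ok K a b c d"
  shows "a s \<in> K" "b s \<in> K" "a s < c s" "c s \<le> d s" "d s < b s" "\<And>x. x \<in> K \<Longrightarrow> \<not> (c s < x \<and> x < d s)"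
    "a (False # s) = a s" "b (False # s) = c s" "a (True # s) = d s" "b (True # s) = b s"
  using assms unfolding tree_ok_def by blast+

lemma tree_step:
  assumes T: "tree_ok K a b c d" and P: "is_path ns"
  shows "a (ns n) \<le> a (ns (Suc n)) \<and> b (ns (Suc n)) \<le> b (ns n)"
proof -
  obtain \<beta> where "ns (Suc n) = \<beta> # ns n" using P by (rule path_step)
  then show ?thesis using tree_facts[OF T, where s="ns n"] by (cases \<beta>) auto
qed

lemma tree_ab: "tree_ok K a b c d \<Longrightarrow> a s < b s"
  using tree_facts(3-5)[of K a b c d s] by linarith

lemma tree_inc: assumes "tree_ok K a b c d" "is_path ns" shows "incseq (\<lambda>n. a (ns n))"
proof (rule incseq_SucI)
  fix n show "a (ns n) \<le> a (ns (Suc n))" using tree_step[OF assms, of n] by simp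
qed

lemma tree_dec: assumes "tree_ok K a b c d" "is_path ns" shows "decseq (\<lambda>n. b (ns n))"
proof (rule decseq_SucI)
  fix n show "b (ns (Suc n)) \<le> b (ns n)" using tree_step[OF assms, of n] by simp
qed

lemma tree_a_le_b:
  assumes T: "tree_ok K a b c d" and P: "is_path ns"
  shows "a (ns n) \<le> b (ns m)"
proof -
  have "a (ns n) \<le> a (ns (max n m))" using tree_inc[OF T P] by (simp add: incseq_def)
  also have "\<dots> \<le> b (ns (max n m))" using tree_ab[OF T] less_imp_le by blast
  also have "\<dots> \<le> b (ns m)" using tree_dec[OF T P] by (simp add: decseq_def)
  finally show ?thesis .
qed

definition ptv :: "(bool list \<Rightarrow> real) \<Rightarrow> (nat \<Rightarrow> bool list) \<Rightarrow> real" where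
  "ptv a ns = lim (\<lambda>n. a (ns n))"

lemma pt_props:
  assumes T: "is_tree K a b c d" and P: "is_path ns"
  shows "(\<lambda>n. a (ns n)) \<longlonglongrightarrow> ptv a ns" "(\<lambda>n. b (ns n)) \<longlonglongrightarrow> ptv a ns"
    "\<And>n. a (ns n) \<le> ptv a ns" "\<And>n. ptv a ns \<le> b (ns n)"
proof -
  have T': "tree_ok K a b c d" using T by (simp add: is_tree_def)
  have bnd: "\<forall>i. a (ns i) \<le> b (ns 0)" using tree_a_le_b[OF T' P] by simp
  obtain L where L: "(\<lambda>n. a (ns n)) \<longlonglongrightarrow> L" and "\<forall>i. a (ns i) \<le> L"
    by (rule incseq_convergent[OF tree_inc[OF T' P] bnd])
  have eq: "ptv a ns = L" unfolding ptv_def using L by (rule limI)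
  show A: "(\<lambda>n. a (ns n)) \<longlonglongrightarrow> ptv a ns" using L eq by simp
  have "(\<lambda>n. a (ns n) + (b (ns n) - a (ns n))) \<longlonglongrightarrow> ptv a ns + 0"
    using A T P unfolding is_tree_def by (intro tendsto_add) auto
  then show B: "(\<lambda>n. b (ns n)) \<longlonglongrightarrow> ptv a ns" by simp
  show "\<And>n. a (ns n) \<le> ptv a ns" using incseq_le[OF tree_inc[OF T' P] A] .
  show "\<And>n. ptv a ns \<le> b (ns n)" using decseq_ge[OF tree_dec[OF T' P] B] .
qed

lemma pt_unique:
  assumes T: "is_tree K a b c d" and P: "is_path ns" and x: "\<And>n. a (ns n) \<le> x \<and> x \<le> b (ns n)"
  shows "x = ptv a ns"
proof -
  have "ptv a ns \<le> x" by (rule LIMSEQ_le_const2[OF pt_props(1)[OF T P]]) (use x in blast)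
  moreover have "x \<le> ptv a ns" by (rule LIMSEQ_le_const[OF pt_props(2)[OF T P]]) (use x in blast)
  ultimately show ?thesis by simp
qed

lemma pt_in:
  assumes T: "is_tree K a b c d" and P: "is_path ns" and K: "closed K"
  shows "ptv a ns \<in> K"
proof -
  have "\<forall>n. a (ns n) \<in> K" using T tree_facts(1) unfolding is_tree_def by blast
  then show ?thesis using closed_sequentially[OF K _ pt_props(1)[OF T P]] by blast
qed

primrec pth :: "(bool list \<Rightarrow> real) \<Rightarrow> real \<Rightarrow> nat \<Rightarrow> bool list" where
  "pth d x 0 = []" | "pth d x (Suc n) = (d (pth d x n) \<le> x) # pth d x n"

lemma pth_path: "is_path (pth d x)"
  by (auto simp: is_path_def)

lemma pth_in:
  assumes T: "is_tree K a b c d" and x: "x \<in> K"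
  shows "a (pth d x n) \<le> x \<and> x \<le> b (pth d x n)"
proof (induct n)
  case 0
  then show ?case using T x by (auto simp: is_tree_def)
next
  case (Suc n)
  let ?s = "pth d x n"
  have t: "a ?s < c ?s \<and> c ?s \<le> d ?s \<and> d ?s < b ?s \<and> \<not> (c ?s < x \<and> x < d ?s) \<and>
        a (False # ?s) = a ?s \<and> b (False # ?s) = c ?s \<and> a (True # ?s) = d ?s \<and> b (True # ?s) = b ?s"
    using T x tree_facts[of K a b c d, where s="?s"] unfolding is_tree_def by blast
  show ?case
  proof (cases "d ?s \<le> x")
    case True then show ?thesis using Suc t by simp
  next
    case False then show ?thesis using Suc t by auto
  qed
qed

lemma rdesc:
  assumes T: "tree_ok K a b c d" and P: "is_path ns"
    and y: "\<And>m. a (ns m) \<le> y \<and> y \<le> b (ns m)" and bn: "b (ns n) = y"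
  shows "ns (Suc (n + k)) = True # ns (n + k) \<and> b (ns (n + k)) = y"
proof -
  have B: "b (ns (n + k)) = y" for k
  proof (induct k)
    case 0 then show ?case using bn by simp
  next
    case (Suc k)
    obtain \<beta> where \<beta>: "ns (Suc (n + k)) = \<beta> # ns (n + k)" using P by (rule path_step)
    have t: "c (ns (n+k)) < b (ns (n+k)) \<and> b (False # ns (n+k)) = c (ns (n+k)) \<and> b (True # ns (n+k)) = b (ns (n+k))"
      using tree_facts[OF T, where s="ns (n+k)"] by linarith
    show ?case
    proof (cases \<beta>)
      case True then show ?thesis using \<beta> t Suc by simp
    next
      case False
      then have "b (ns (Suc (n + k))) < y" using \<beta> t Suc by simp
      then show ?thesis using y[of "Suc (n+k)"] by simp
    qed
  qed
  obtain \<beta> where \<beta>: "ns (Suc (n + k)) = \<beta> # ns (n + k)" using P by (rule path_step)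
  have t: "c (ns (n+k)) < b (ns (n+k)) \<and> b (False # ns (n+k)) = c (ns (n+k))"
    using tree_facts[OF T, where s="ns (n+k)"] by linarith
  have "\<beta> = True"
  proof (rule ccontr)
    assume "\<beta> \<noteq> True"
    then have "b (ns (Suc (n + k))) < y" using \<beta> t B[of k] by simp
    then show False using y[of "Suc (n+k)"] by simp
  qed
  then show ?thesis using \<beta> B by simp
qed

lemma ldesc:
  assumes T: "tree_ok K a b c d" and P: "is_path ns"
    and y: "\<And>m. a (ns m) \<le> y \<and> y \<le> b (ns m)" and an: "a (ns n) = y"
  shows "ns (Suc (n + k)) = False # ns (n + k) \<and> a (ns (n + k)) = y"
proof -
  have A: "a (ns (n + k)) = y" for k
  proof (induct k)
    case 0 then show ?case using an by simp
  next
    case (Suc k)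
    obtain \<beta> where \<beta>: "ns (Suc (n + k)) = \<beta> # ns (n + k)" using P by (rule path_step)
    have t: "a (ns (n+k)) < d (ns (n+k)) \<and> a (True # ns (n+k)) = d (ns (n+k)) \<and> a (False # ns (n+k)) = a (ns (n+k))"
      using tree_facts[OF T, where s="ns (n+k)"] by linarith
    show ?case
    proof (cases \<beta>)
      case False then show ?thesis using \<beta> t Suc by simp
    next
      case True
      then have "y < a (ns (Suc (n + k)))" using \<beta> t Suc by simp
      then show ?thesis using y[of "Suc (n+k)"] by simp
    qed
  qed
  obtain \<beta> where \<beta>: "ns (Suc (n + k)) = \<beta> # ns (n + k)" using P by (rule path_step)
  have t: "a (ns (n+k)) < d (ns (n+k)) \<and> a (True # ns (n+k)) = d (ns (n+k))"
    using tree_facts[OF T, where s="ns (n+k)"] by linarith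
  have "\<beta> = False"
  proof (rule ccontr)
    assume "\<beta> \<noteq> False"
    then have "y < a (ns (Suc (n + k)))" using \<beta> t A[of k] by simp
    then show False using y[of "Suc (n+k)"] by simp
  qed
  then show ?thesis using \<beta> A by simp
qed

lemma const_right:
  assumes T: "is_tree K a b c d" and P: "is_path ns" and R: "\<And>k. ns (Suc (n + k)) = True # ns (n + k)"
  shows "ptv a ns = b (ns n)"
proof -
  have T': "tree_ok K a b c d" using T by (simp add: is_tree_def)
  have B: "b (ns (k + n)) = b (ns n)" for k
  proof (induct k)
    case (Suc k) then show ?case using R[of k] tree_facts(10)[OF T'] by (simp add: add.commute)
  qed simp
  have "(\<lambda>k. b (ns (k + n))) \<longlonglongrightarrow> ptv a ns"
    using pt_props(2)[OF T P] by (rule LIMSEQ_ignore_initial_segment)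
  then show ?thesis using B by (simp add: LIMSEQ_const_iff)
qed

lemma const_left:
  assumes T: "is_tree K a b c d" and P: "is_path ns" and R: "\<And>k. ns (Suc (n + k)) = False # ns (n + k)"
  shows "ptv a ns = a (ns n)"
proof -
  have T': "tree_ok K a b c d" using T by (simp add: is_tree_def)
  have B: "a (ns (k + n)) = a (ns n)" for k
  proof (induct k)
    case (Suc k) then show ?case using R[of k] tree_facts(7)[OF T'] by (simp add: add.commute)
  qed simp
  have "(\<lambda>k. a (ns (k + n))) \<longlonglongrightarrow> ptv a ns"
    using pt_props(1)[OF T P] by (rule LIMSEQ_ignore_initial_segment)
  then show ?thesis using B by (simp add: LIMSEQ_const_iff)
qed

lemma paths_diverge:
  assumes P: "is_path p" and Q: "is_path q" and ne: "p \<noteq> q"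
  obtains n \<beta> \<gamma> where "p n = q n" "p (Suc n) = \<beta> # p n" "q (Suc n) = \<gamma> # q n" "\<beta> \<noteq> \<gamma>"
proof -
  obtain m where m: "p m \<noteq> q m" using ne by blast
  define N where "N = (LEAST m. p m \<noteq> q m)"
  have N: "p N \<noteq> q N" unfolding N_def using m by (rule LeastI)
  have lt: "k < N \<Longrightarrow> p k = q k" for k unfolding N_def using not_less_Least by blast
  have "N \<noteq> 0"
  proof
    assume "N = 0" then show False using N P Q by (simp add: is_path_def)
  qed
  then obtain n where n: "N = Suc n" by (cases N) auto
  have eq: "p n = q n" using lt n by simp
  obtain \<beta> where \<beta>: "p (Suc n) = \<beta> # p n" using P by (rule path_step)
  obtain \<gamma> where \<gamma>: "q (Suc n) = \<gamma> # q n" using Q by (rule path_step)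
  have "\<beta> \<noteq> \<gamma>" using N n \<beta> \<gamma> eq by auto
  then show ?thesis using that eq \<beta> \<gamma> by blast
qed

lemma div_same:
  assumes T: "is_tree K a b c d" and T': "is_tree K' a' b' c' d'"
    and sync: "\<And>s. c s = d s \<longleftrightarrow> c' s = d' s"
    and P: "is_path p" and Q: "is_path q"
    and xp: "\<And>m. a (p m) \<le> x \<and> x \<le> b (p m)" and xq: "\<And>m. a (q m) \<le> x \<and> x \<le> b (q m)"
    and eq: "p n = q n" and pn: "p (Suc n) = False # p n" and qn: "q (Suc n) = True # q n"
  shows "ptv a' p = ptv a' q"
proof -
  have To: "tree_ok K a b c d" using T by (simp add: is_tree_def)
  have To': "tree_ok K' a' b' c' d'" using T' by (simp add: is_tree_def)
  define s where "s = p n"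
  have bp: "b (p (Suc n)) = c s" using pn tree_facts(8)[OF To] s_def by simp
  have aq: "a (q (Suc n)) = d s" using qn tree_facts(9)[OF To] s_def eq by simp
  have "x \<le> c s" "d s \<le> x" using xp[of "Suc n"] xq[of "Suc n"] bp aq by auto
  then have cx: "c s = x" "d s = x" using tree_facts(4)[OF To, where s=s] by auto
  have R: "p (Suc (Suc n + k)) = True # p (Suc n + k)" for k
    using rdesc[OF To P xp, of "Suc n" k] bp cx by simp
  have L: "q (Suc (Suc n + k)) = False # q (Suc n + k)" for k
    using ldesc[OF To Q xq, of "Suc n" k] aq cx by simp
  have "ptv a' p = b' (p (Suc n))" by (rule const_right[OF T' P R])
  also have "\<dots> = c' s" using pn tree_facts(8)[OF To'] s_def by simp
  also have "\<dots> = d' s" using sync[of s] cx by simp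
  also have "\<dots> = a' (q (Suc n))" using qn tree_facts(9)[OF To'] s_def eq by simp
  also have "\<dots> = ptv a' q" by (rule const_left[OF T' Q L, symmetric])
  finally show ?thesis .
qed

lemma same_point:
  assumes T: "is_tree K a b c d" and T': "is_tree K' a' b' c' d'"
    and sync: "\<And>s. c s = d s \<longleftrightarrow> c' s = d' s"
    and P: "is_path p" and Q: "is_path q"
    and xp: "\<And>m. a (p m) \<le> x \<and> x \<le> b (p m)" and xq: "\<And>m. a (q m) \<le> x \<and> x \<le> b (q m)"
  shows "ptv a' p = ptv a' q"
proof (cases "p = q")
  case False
  obtain n \<beta> \<gamma> where n: "p n = q n" "p (Suc n) = \<beta> # p n" "q (Suc n) = \<gamma> # q n" "\<beta> \<noteq> \<gamma>"
    by (rule paths_diverge[OF P Q False])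
  show ?thesis
  proof (cases \<beta>)
    case True
    then have "\<gamma> = False" using n by simp
    then show ?thesis using div_same[OF T T' sync Q P xq xp n(1)[symmetric]] n True by simp
  next
    case False
    then have "\<gamma> = True" using n by simp
    then show ?thesis using div_same[OF T T' sync P Q xp xq n(1)] n False by simp
  qed
qed simp

theorem tree_homeomorphic:
  assumes T: "is_tree K a b c d" and T': "is_tree K' a' b' c' d'"
    and sync: "\<And>s. c s = d s \<longleftrightarrow> c' s = d' s"
    and cK: "compact K" and cK': "compact K'"
  shows "K homeomorphic K'"
proof -
  have To: "tree_ok K a b c d" using T by (simp add: is_tree_def)
  have To': "tree_ok K' a' b' c' d'" using T' by (simp add: is_tree_def)
  have clK: "closed K" and clK': "closed K'" using cK cK' compact_imp_closed by auto
  define f where "f x = ptv a' (pth d x)" for x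
  have mono: "f x < f y" if x: "x \<in> K" and y: "y \<in> K" and xy: "x < y" for x y
  proof -
    let ?px = "pth d x" and ?py = "pth d y"
    have inx: "\<And>m. a (?px m) \<le> x \<and> x \<le> b (?px m)" using pth_in[OF T x] by blast
    have iny: "\<And>m. a (?py m) \<le> y \<and> y \<le> b (?py m)" using pth_in[OF T y] by blast
    have "?px \<noteq> ?py"
    proof
      assume "?px = ?py"
      then have "x = ptv a ?px" "y = ptv a ?px"
        using pt_unique[OF T pth_path inx] pt_unique[OF T pth_path iny] by auto
      then show False using xy by simp
    qed
    then obtain n \<beta> \<gamma> where n: "?px n = ?py n" "?px (Suc n) = \<beta> # ?px n" "?py (Suc n) = \<gamma> # ?py n" "\<beta> \<noteq> \<gamma>"
      by (rule paths_diverge[OF pth_path pth_path])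
    define s where "s = ?px n"
    have \<beta>: "\<beta> = (d s \<le> x)" using n(2) s_def by simp
    have \<gamma>: "\<gamma> = (d s \<le> y)" using n(3) n(1) s_def by simp
    have bF: "\<beta> = False" "\<gamma> = True" using \<beta> \<gamma> n(4) xy by auto
    have px: "?px (Suc n) = False # s" and py: "?py (Suc n) = True # s" using n bF s_def by auto
    have bpx: "b' (?px (Suc n)) = c' s" unfolding px by (rule tree_facts(8)[OF To'])
    have apy: "a' (?py (Suc n)) = d' s" unfolding py by (rule tree_facts(9)[OF To'])
    have bpx0: "b (?px (Suc n)) = c s" unfolding px by (rule tree_facts(8)[OF To])
    have apy0: "a (?py (Suc n)) = d s" unfolding py by (rule tree_facts(9)[OF To])
    have fx: "f x \<le> c' s"
      using pt_props(4)[OF T' pth_path[of d x], of "Suc n"] bpx f_def by simp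
    have fy: "d' s \<le> f y"
      using pt_props(3)[OF T' pth_path[of d y], of "Suc n"] apy f_def by simp
    show ?thesis
    proof (rule ccontr)
      assume "\<not> f x < f y"
      then have eqs: "c' s = f x" "d' s = f x" using fx fy tree_facts(4)[OF To', where s=s] by auto
      then have cd: "c s = d s" using sync by simp
      have fin: "\<And>m. a' (?px m) \<le> f x \<and> f x \<le> b' (?px m)"
        using pt_props(3,4)[OF T' pth_path[of d x]] f_def by simp
      have R: "?px (Suc (Suc n + k)) = True # ?px (Suc n + k)" for k
        using rdesc[OF To' pth_path fin, of "Suc n" k] bpx eqs by simp
      have "ptv a ?px = b (?px (Suc n))" by (rule const_right[OF T pth_path R])
      then have xc: "x = c s" using pt_unique[OF T pth_path inx] bpx0 by simp
      have fxy: "f x = f y" using \<open>\<not> f x < f y\<close> fx fy eqs by simp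
      have fin': "\<And>m. a' (?py m) \<le> f x \<and> f x \<le> b' (?py m)"
        using pt_props(3,4)[OF T' pth_path[of d y]] f_def fxy by simp
      have L: "?py (Suc (Suc n + k)) = False # ?py (Suc n + k)" for k
        using ldesc[OF To' pth_path fin', of "Suc n" k] apy eqs by simp
      have "ptv a ?py = a (?py (Suc n))" by (rule const_left[OF T pth_path L])
      then have yd: "y = d s" using pt_unique[OF T pth_path iny] apy0 by simp
      show False using xc yd cd xy by simp
    qed
  qed
  have img: "f ` K = K'"
  proof
    show "f ` K \<subseteq> K'" using pt_in[OF T' pth_path clK'] f_def by auto
    show "K' \<subseteq> f ` K"
    proof
      fix y assume y: "y \<in> K'"
      let ?q = "pth d' y"
      define x where "x = ptv a ?q"
      have xK: "x \<in> K" unfolding x_def by (rule pt_in[OF T pth_path clK])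
      have xq: "\<And>m. a (?q m) \<le> x \<and> x \<le> b (?q m)" using pt_props(3,4)[OF T pth_path] x_def by simp
      have "f x = ptv a' ?q"
        unfolding f_def by (rule same_point[OF T T' sync pth_path pth_path pth_in[OF T xK] xq])
      also have "\<dots> = y" using pt_unique[OF T' pth_path pth_in[OF T' y]] by simp
      finally show "y \<in> f ` K" using xK by (metis image_eqI)
    qed
  qed
  show ?thesis by (rule mono_surj_homeomorphic[OF cK cK' mono img])
qed

section \<open>Real achievement sets: self-similarity\<close>

lemma sel_real: "(if b then 1 else 0) *\<^sub>R (x::real) = (if b then x else 0)"
  by simp

lemma asum_real: "asum v e = (\<Sum>n. if e n then v n else (0::real))"
  unfolding asum_def by (rule suminf_cong) simp

lemma summable_sel_real:
  fixes v :: "nat \<Rightarrow> real"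
  assumes "summable (\<lambda>n. norm (v n))"
  shows "summable (\<lambda>n. if e n then v n else 0)"
proof -
  have "(\<lambda>n. (if e n then 1 else 0) *\<^sub>R v n) = (\<lambda>n. if e n then v n else 0)" by auto
  then show ?thesis using summable_sel[OF assms, of e] by simp
qed

lemma summable_shift_norm:
  fixes v :: "nat \<Rightarrow> real"
  assumes "summable (\<lambda>n. norm (v n))" shows "summable (\<lambda>n. norm (v (Suc n)))"
  using assms summable_Suc_iff[of "\<lambda>n. norm (v n)"] by simp

lemma asum_head:
  fixes v :: "nat \<Rightarrow> real"
  assumes "summable (\<lambda>n. norm (v n))"
  shows "asum v e = (if e 0 then v 0 else 0) + asum (\<lambda>n. v (Suc n)) (\<lambda>n. e (Suc n))"
  using suminf_split_head[OF summable_sel_real[OF assms, of e]] unfolding asum_real by simp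

lemma ach_split_first:
  fixes v :: "nat \<Rightarrow> real"
  assumes sv: "summable (\<lambda>n. norm (v n))"
  shows "achievement_set v = achievement_set (\<lambda>n. v (Suc n)) \<union> (\<lambda>t. v 0 + t) ` achievement_set (\<lambda>n. v (Suc n))"
proof
  show "achievement_set v \<subseteq> achievement_set (\<lambda>n. v (Suc n)) \<union> (\<lambda>t. v 0 + t) ` achievement_set (\<lambda>n. v (Suc n))"
  proof
    fix t assume "t \<in> achievement_set v"
    then obtain e where t: "t = asum v e" unfolding achievement_set_eq by auto
    show "t \<in> achievement_set (\<lambda>n. v (Suc n)) \<union> (\<lambda>t. v 0 + t) ` achievement_set (\<lambda>n. v (Suc n))"
    proof (cases "e 0")
      case True
      then have "t = v 0 + asum (\<lambda>n. v (Suc n)) (\<lambda>n. e (Suc n))" using t asum_head[OF sv, of e] by simp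
      then show ?thesis unfolding achievement_set_eq by blast
    next
      case False
      then have "t = asum (\<lambda>n. v (Suc n)) (\<lambda>n. e (Suc n))" using t asum_head[OF sv, of e] by simp
      then show ?thesis unfolding achievement_set_eq by blast
    qed
  qed
  have H: "(if b then v 0 else 0) + asum (\<lambda>n. v (Suc n)) e' \<in> achievement_set v" for b e'
  proof -
    define e where "e n = (case n of 0 \<Rightarrow> b | Suc m \<Rightarrow> e' m)" for n
    have "asum v e = (if b then v 0 else 0) + asum (\<lambda>n. v (Suc n)) e'"
      using asum_head[OF sv, of e] by (simp add: e_def)
    then show ?thesis unfolding achievement_set_eq by (metis rangeI)
  qed
  show "achievement_set (\<lambda>n. v (Suc n)) \<union> (\<lambda>t. v 0 + t) ` achievement_set (\<lambda>n. v (Suc n)) \<subseteq> achievement_set v"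
  proof
    fix t assume "t \<in> achievement_set (\<lambda>n. v (Suc n)) \<union> (\<lambda>t. v 0 + t) ` achievement_set (\<lambda>n. v (Suc n))"
    then consider e' where "t = asum (\<lambda>n. v (Suc n)) e'" | e' where "t = v 0 + asum (\<lambda>n. v (Suc n)) e'"
      unfolding achievement_set_eq by blast
    then show "t \<in> achievement_set v"
    proof cases
      case 1 then show ?thesis using H[of False e'] by simp
    next
      case 2 then show ?thesis using H[of True e'] by simp
    qed
  qed
qed

lemma ach_scale:
  fixes v :: "nat \<Rightarrow> real"
  assumes sv: "summable (\<lambda>n. norm (v n))"
  shows "achievement_set (\<lambda>n. q * v n) = (\<lambda>t. q * t) ` achievement_set v"
proof -
  have "asum (\<lambda>n. q * v n) e = q * asum v e" for e
    unfolding asum_real using suminf_mult[OF summable_sel_real[OF sv, of e], of q]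
    by (simp add: if_distrib cong: if_cong)
  then show ?thesis unfolding achievement_set_eq by (auto simp: image_iff)
qed

lemma ach_bounds:
  fixes v :: "nat \<Rightarrow> real"
  assumes sv: "summable (\<lambda>n. norm (v n))" and nn: "\<And>n. 0 \<le> v n"
  shows "achievement_set v \<subseteq> {0..(\<Sum>n. v n)}"
proof
  fix t assume "t \<in> achievement_set v"
  then obtain e where t: "t = asum v e" unfolding achievement_set_eq by auto
  have sv': "summable v" using sv nn by simp
  have "0 \<le> t" unfolding t asum_real by (rule suminf_nonneg[OF summable_sel_real[OF sv]]) (use nn in auto)
  moreover have "t \<le> (\<Sum>n. v n)" unfolding t asum_real
    by (rule suminf_le[OF _ summable_sel_real[OF sv] sv']) (use nn in auto)
  ultimately show "t \<in> {0..(\<Sum>n. v n)}" by simp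
qed

lemma ach_symm:
  fixes v :: "nat \<Rightarrow> real"
  assumes sv: "summable (\<lambda>n. norm (v n))" and t: "t \<in> achievement_set v"
  shows "(\<Sum>n. v n) - t \<in> achievement_set v"
proof -
  obtain e where te: "t = asum v e" using t unfolding achievement_set_eq by auto
  have sv': "summable v" using sv summable_norm_cancel by blast
  have "(\<Sum>n. v n) - t = (\<Sum>n. v n - (if e n then v n else 0))"
    unfolding te asum_real by (rule suminf_diff[OF sv' summable_sel_real[OF sv]])
  also have "\<dots> = asum v (\<lambda>n. \<not> e n)" unfolding asum_real by (rule suminf_cong) auto
  finally show ?thesis unfolding achievement_set_eq by (metis rangeI)
qed

lemma ach_zero:
  fixes v :: "nat \<Rightarrow> real"
  shows "0 \<in> achievement_set v"
proof -
  have "asum v (\<lambda>n. False) = 0" unfolding asum_real by simp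
  then show ?thesis unfolding achievement_set_eq by (metis rangeI)
qed

lemma ach_total:
  fixes v :: "nat \<Rightarrow> real"
  assumes sv: "summable (\<lambda>n. norm (v n))"
  shows "(\<Sum>n. v n) \<in> achievement_set v"
  using ach_symm[OF sv ach_zero] by simp

lemma tiling:
  fixes S :: "real set"
  assumes cl: "closed S" and sub: "S \<subseteq> {0..1}" and ne: "S \<noteq> {}"
    and til: "\<And>t. t \<in> {0..1} \<Longrightarrow> \<exists>u\<in>{0..1}. \<forall>w\<in>S. \<exists>s\<in>S. \<bar>s - t\<bar> \<le> \<bar>w - u\<bar> / 2"
  shows "{0..1} \<subseteq> S"
proof -
  have A: "\<forall>t\<in>{0..1}. \<exists>s\<in>S. \<bar>s - t\<bar> \<le> (1/2)^n" for n
  proof (induct n)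
    case 0
    obtain s where s: "s \<in> S" using ne by auto
    then have "s \<in> {0..1}" using sub by blast
    then have "\<bar>s - t\<bar> \<le> (1/2)^0" if "t \<in> {0..1}" for t :: real using that by auto
    then show ?case using s by blast
  next
    case (Suc n)
    show ?case
    proof
      fix t :: real assume t: "t \<in> {0..1}"
      obtain u where u: "u \<in> {0..1}" "\<forall>w\<in>S. \<exists>s\<in>S. \<bar>s - t\<bar> \<le> \<bar>w - u\<bar> / 2" using til[OF t] by blast
      obtain w where w: "w \<in> S" "\<bar>w - u\<bar> \<le> (1/2)^n" using Suc u(1) by blast
      obtain s where s: "s \<in> S" "\<bar>s - t\<bar> \<le> \<bar>w - u\<bar> / 2" using u(2) w(1) by blast
      have "\<bar>s - t\<bar> \<le> (1/2)^Suc n" using s(2) w(2) by simp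
      then show "\<exists>s\<in>S. \<bar>s - t\<bar> \<le> (1/2)^Suc n" using s(1) by blast
    qed
  qed
  show ?thesis
  proof
    fix t :: real assume t: "t \<in> {0..1}"
    have "\<forall>\<epsilon>>0. \<exists>y\<in>S. dist y t < \<epsilon>"
    proof (intro allI impI)
      fix \<epsilon> :: real assume "\<epsilon> > 0"
      then obtain n where n: "(1/2)^n < \<epsilon>" using real_arch_pow_inv[of \<epsilon> "1/2"] by auto
      obtain s where s: "s \<in> S" "\<bar>s - t\<bar> \<le> (1/2)^n" using A t by blast
      then have "dist s t < \<epsilon>" using n by (simp add: dist_real_def)
      then show "\<exists>y\<in>S. dist y t < \<epsilon>" using s by blast
    qed
    then show "t \<in> S" using closed_approachable[OF cl] by blast
  qed
qed

lemma shift_geom: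
  fixes v :: "nat \<Rightarrow> real"
  assumes sv: "summable (\<lambda>n. norm (v n))" and g: "\<And>n. v (Suc n) = q * v n"
  shows "achievement_set (\<lambda>n. v (Suc n)) = (\<lambda>t. q * t) ` achievement_set v"
  using ach_scale[OF sv, of q] g by simp

lemma aff_int:
  fixes p0 s :: real
  assumes s: "s > 0"
  shows "(\<lambda>t. p0 + s*t) ` X \<inter> {p0 + s*\<alpha> .. p0 + s*\<beta>} = (\<lambda>t. p0 + s*t) ` (X \<inter> {\<alpha>..\<beta>})"
  using s by (auto simp: image_iff)

lemma aff_int_open:
  fixes p0 s :: real
  assumes s: "s > 0"
  shows "(\<lambda>t. p0 + s*t) ` X \<inter> {p0 + s*\<alpha> <..< p0 + s*\<beta>} = (\<lambda>t. p0 + s*t) ` (X \<inter> {\<alpha><..<\<beta>})"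
  using s by (auto simp: image_iff)

definition v2 :: "nat \<Rightarrow> real" where "v2 n = (1/2)^Suc n"

lemma v2_sums: "v2 sums 1" unfolding v2_def by (rule power_half_series)

lemma v2_summable: "summable (\<lambda>n. norm (v2 n))"
  using v2_sums by (simp add: v2_def sums_iff)

lemma A2_eq: "achievement_set v2 = {0..1}"
proof -
  let ?A = "achievement_set v2"
  have st: "v2 (Suc n) = (1/2) * v2 n" for n by (simp add: v2_def)
  have e1: "?A = achievement_set (\<lambda>n. v2 (Suc n)) \<union> (\<lambda>t. v2 0 + t) ` achievement_set (\<lambda>n. v2 (Suc n))"
    by (rule ach_split_first[OF v2_summable])
  have e2: "achievement_set (\<lambda>n. v2 (Suc n)) = (\<lambda>t. (1/2)*t) ` ?A" by (rule shift_geom[OF v2_summable st])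
  have e3: "v2 0 = 1/2" by (simp add: v2_def)
  have split: "?A = (\<lambda>t. (1/2) * t) ` ?A \<union> (\<lambda>t. 1/2 + t) ` ((\<lambda>t. (1/2) * t) ` ?A)"
    using e1 unfolding e2 e3 .
  have nn: "\<And>n. 0 \<le> v2 n" by (simp add: v2_def)
  have sub: "?A \<subseteq> {0..1}"
    using ach_bounds[OF v2_summable nn] v2_sums by (simp add: sums_iff)
  have cl: "closed ?A" using compact_achievement_set[OF v2_summable] compact_imp_closed by blast
  have h1: "w \<in> ?A \<Longrightarrow> w/2 \<in> ?A" for w using split by auto
  have h2: "w \<in> ?A \<Longrightarrow> 1/2 + w/2 \<in> ?A" for w using split by auto
  have "{0..1} \<subseteq> ?A"
  proof (rule tiling[OF cl sub])
    show "?A \<noteq> {}" using ach_zero by blast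
    fix t :: real assume t: "t \<in> {0..1}"
    show "\<exists>u\<in>{0..1}. \<forall>w\<in>?A. \<exists>s\<in>?A. \<bar>s - t\<bar> \<le> \<bar>w - u\<bar> / 2"
    proof (cases "t \<le> 1/2")
      case True
      show ?thesis
      proof (rule bexI[of _ "2*t"], rule ballI)
        fix w assume "w \<in> ?A"
        then show "\<exists>s\<in>?A. \<bar>s - t\<bar> \<le> \<bar>w - 2*t\<bar> / 2" using h1 by (intro bexI[of _ "w/2"]) (auto simp: abs_if)
      qed (use t True in auto)
    next
      case False
      show ?thesis
      proof (rule bexI[of _ "2*t - 1"], rule ballI)
        fix w assume "w \<in> ?A"
        then show "\<exists>s\<in>?A. \<bar>s - t\<bar> \<le> \<bar>w - (2*t - 1)\<bar> / 2" using h2 by (intro bexI[of _ "1/2 + w/2"]) (auto simp: abs_if)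
      qed (use t False in auto)
    qed
  qed
  then show ?thesis using sub by blast
qed

section \<open>The standard Cantor set\<close>

definition v3 :: "nat \<Rightarrow> real" where "v3 n = (2/3) * (1/3)^n"

lemma v3_sums: "v3 sums 1"
proof -
  have "(\<lambda>n. (1/3::real)^n) sums (1 / (1 - 1/3))" by (rule geometric_sums) simp
  then have "(\<lambda>n. (2/3) * (1/3::real)^n) sums ((2/3) * (1 / (1 - 1/3)))" by (rule sums_mult)
  then show ?thesis unfolding v3_def by simp
qed

lemma v3_summable: "summable (\<lambda>n. norm (v3 n))"
proof -
  have "norm (v3 n) = v3 n" for n by (simp add: v3_def)
  then show ?thesis using v3_sums by (simp add: sums_iff)
qed

definition A3 where "A3 = achievement_set v3"

lemma A3_split: "A3 = (\<lambda>t. (1/3) * t) ` A3 \<union> (\<lambda>t. 2/3 + t) ` ((\<lambda>t. (1/3) * t) ` A3)"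
proof -
  have st: "v3 (Suc n) = (1/3) * v3 n" for n by (simp add: v3_def)
  have e1: "A3 = achievement_set (\<lambda>n. v3 (Suc n)) \<union> (\<lambda>t. v3 0 + t) ` achievement_set (\<lambda>n. v3 (Suc n))"
    unfolding A3_def by (rule ach_split_first[OF v3_summable])
  have e2: "achievement_set (\<lambda>n. v3 (Suc n)) = (\<lambda>t. (1/3)*t) ` A3" unfolding A3_def by (rule shift_geom[OF v3_summable st])
  have e3: "v3 0 = 2/3" by (simp add: v3_def)
  show ?thesis using e1 unfolding e2 e3 .
qed

lemma A3_sub: "A3 \<subseteq> {0..1}"
proof -
  have nn: "\<And>n. 0 \<le> v3 n" by (simp add: v3_def)
  show ?thesis using ach_bounds[OF v3_summable nn] v3_sums unfolding A3_def by (simp add: sums_iff)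
qed

lemma A3_compact: "compact A3"
  unfolding A3_def by (rule compact_achievement_set[OF v3_summable])

lemma A3_0: "0 \<in> A3" unfolding A3_def by (rule ach_zero)
lemma A3_1: "1 \<in> A3" unfolding A3_def using ach_total[OF v3_summable] v3_sums by (simp add: sums_iff)
lemma A3_13: "1/3 \<in> A3" using A3_split A3_1 by auto
lemma A3_23: "2/3 \<in> A3" using A3_split A3_0 by auto

lemma A3_left: "A3 \<inter> {0..1/3} = (\<lambda>t. (1/3) * t) ` A3"
  using A3_sub by (subst (1) A3_split) (auto simp: image_iff)

lemma A3_right: "A3 \<inter> {2/3..1} = (\<lambda>t. 2/3 + (1/3) * t) ` A3"
  using A3_sub by (subst (1) A3_split) (auto simp: image_iff)

lemma A3_gap: "A3 \<inter> {1/3<..<2/3} = {}"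
  using A3_sub by (subst A3_split) (auto simp: image_iff)

fun cn :: "bool list \<Rightarrow> real \<times> real" where
  "cn [] = (0, 1)"
| "cn (\<beta> # l) = (if \<beta> then (fst (cn l) + 2/3 * snd (cn l), snd (cn l) / 3) else (fst (cn l), snd (cn l) / 3))"

definition "a3 l = fst (cn l)"
definition "b3 l = fst (cn l) + snd (cn l)"
definition "c3 l = fst (cn l) + snd (cn l) / 3"
definition "d3 l = fst (cn l) + 2/3 * snd (cn l)"

lemma cn_snd: "snd (cn l) = (1/3)^length l"
  by (induct l) auto

lemma cn_pos: "snd (cn l) > 0" by (simp add: cn_snd)

lemma path_length: "is_path ns \<Longrightarrow> length (ns n) = n"
proof (induct n)
  case 0 then show ?case by (simp add: is_path_def)
next
  case (Suc n)
  obtain \<beta> where "ns (Suc n) = \<beta> # ns n" using Suc(2) by (rule path_step)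
  then show ?case using Suc by simp
qed

lemma cn_loc: "A3 \<inter> {a3 l .. b3 l} = (\<lambda>t. fst (cn l) + snd (cn l) * t) ` A3"
proof (induct l)
  case Nil then show ?case using A3_sub by (auto simp: a3_def b3_def)
next
  case (Cons \<beta> l)
  define p where "p = fst (cn l)"
  define s where "s = snd (cn l)"
  have s: "s > 0" using cn_pos s_def by simp
  have IH: "A3 \<inter> {p .. p + s} = (\<lambda>t. p + s * t) ` A3" using Cons by (simp add: a3_def b3_def p_def s_def)
  show ?case
  proof (cases \<beta>)
    case False
    have "A3 \<inter> {p .. p + s/3} = (A3 \<inter> {p .. p + s}) \<inter> {p + s*0 .. p + s*(1/3)}" using s by auto
    also have "\<dots> = (\<lambda>t. p + s * t) ` (A3 \<inter> {0..1/3})" unfolding IH by (rule aff_int[OF s])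
    also have "\<dots> = (\<lambda>t. p + (s/3) * t) ` A3" unfolding A3_left image_image by (simp add: mult.assoc)
    finally show ?thesis using False by (simp add: a3_def b3_def p_def s_def)
  next
    case True
    have "A3 \<inter> {(p + 2/3* s) .. (p + 2/3* s + s/3)} = (A3 \<inter> {p .. p + s}) \<inter> {p + s*(2/3) .. p + s*1}" using s by auto
    also have "\<dots> = (\<lambda>t. p + s * t) ` (A3 \<inter> {2/3..1})" unfolding IH by (rule aff_int[OF s])
    also have "\<dots> = (\<lambda>t. (p + 2/3* s) + (s/3) * t) ` A3" unfolding A3_right image_image by (simp add: algebra_simps)
    finally show ?thesis using True by (simp add: a3_def b3_def p_def s_def)
  qed
qed

lemma cn_mem: "t \<in> A3 \<Longrightarrow> fst (cn l) + snd (cn l) * t \<in> A3"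
  using cn_loc[of l] by blast

lemma A3_tree: "is_tree A3 a3 b3 c3 d3"
  unfolding is_tree_def
proof (intro conjI allI impI)
  show "A3 \<subseteq> {a3 []..b3 []}" using A3_sub by (simp add: a3_def b3_def)
  show "tree_ok A3 a3 b3 c3 d3"
    unfolding tree_ok_def
  proof (intro allI conjI ballI)
    fix l
    have s: "snd (cn l) > 0" by (rule cn_pos)
    show "a3 l \<in> A3" using cn_mem[OF A3_0, of l] by (simp add: a3_def)
    show "b3 l \<in> A3" using cn_mem[OF A3_1, of l] by (simp add: b3_def)
    show "a3 l < c3 l" "c3 l \<le> d3 l" "d3 l < b3 l" using s by (auto simp: a3_def b3_def c3_def d3_def)
    show "a3 (False # l) = a3 l" "b3 (False # l) = c3 l" "a3 (True # l) = d3 l" "b3 (True # l) = b3 l"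
      by (auto simp: a3_def b3_def c3_def d3_def)
    fix x assume x: "x \<in> A3"
    show "\<not> (c3 l < x \<and> x < d3 l)"
    proof
      assume cx: "c3 l < x \<and> x < d3 l"
      then have "x \<in> A3 \<inter> {a3 l .. b3 l}" using x s by (auto simp: a3_def b3_def c3_def d3_def)
      then obtain t where t: "t \<in> A3" "x = fst (cn l) + snd (cn l) * t" using cn_loc by auto
      have "1/3 < t" "t < 2/3" using cx t s by (auto simp: c3_def d3_def)
      then show False using A3_gap t by auto
    qed
  qed
  fix ns :: "nat \<Rightarrow> bool list" assume P: "is_path ns"
  have "(\<lambda>n. b3 (ns n) - a3 (ns n)) = (\<lambda>n. (1/3)^n)"
    using path_length[OF P] by (simp add: a3_def b3_def cn_snd)
  then show "(\<lambda>n. b3 (ns n) - a3 (ns n)) \<longlonglongrightarrow> 0" by (simp add: LIMSEQ_power_zero)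
qed

definition rq :: "nat \<Rightarrow> real" where "rq k = of_rat (from_nat k)"

lemma rq_dense: "x < y \<Longrightarrow> \<exists>k. x < rq k \<and> rq k < y"
proof -
  assume "x < y"
  then obtain q where q: "q \<in> \<rat>" "x < q" "q < y" using Rats_dense_in_real by blast
  then obtain q' where "q = of_rat q'" by (auto elim: Rats_cases)
  then have "q = rq (to_nat q')" by (simp add: rq_def)
  then show ?thesis using q by blast
qed

lemma rq_open: "open U \<Longrightarrow> y \<in> U \<Longrightarrow> \<exists>k. rq k \<in> U"
proof -
  assume U: "open U" "y \<in> U"
  then obtain e where e: "e > 0" "ball y e \<subseteq> U" using open_contains_ball by blast
  obtain k where "y - e < rq k" "rq k < y + e" using rq_dense[of "y - e" "y + e"] e by auto
  then have "rq k \<in> ball y e" by (auto simp: dist_real_def)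
  then show ?thesis using e by blast
qed

lemma rank_contra:
  fixes k :: "nat \<Rightarrow> nat"
  assumes "infinite I" "\<And>n. n \<in> I \<Longrightarrow> k n \<le> j" "\<And>n m. n \<in> I \<Longrightarrow> m \<in> I \<Longrightarrow> n < m \<Longrightarrow> k n \<noteq> k m"
  shows False
proof -
  have "inj_on k I" unfolding inj_on_def by (metis assms(3) linorder_neqE_nat)
  moreover have "k ` I \<subseteq> {..j}" using assms(2) by auto
  ultimately have "finite I" by (meson finite_atMost finite_imageD finite_subset)
  then show False using assms(1) by simp
qed

definition gapl :: "real set \<Rightarrow> real \<Rightarrow> real" where "gapl K y = Sup (K \<inter> {..y})"
definition gapr :: "real set \<Rightarrow> real \<Rightarrow> real" where "gapr K y = Inf (K \<inter> {y..})"

lemma gap_props: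
  assumes K: "closed K" and a: "a \<in> K" "a < y" and b: "b \<in> K" "y < b" and y: "y \<notin> K"
  shows "gapl K y \<in> K" "a \<le> gapl K y" "gapl K y < y" "y < gapr K y" "gapr K y \<le> b" "gapr K y \<in> K"
    "\<And>x. x \<in> K \<Longrightarrow> x < y \<Longrightarrow> x \<le> gapl K y" "\<And>x. x \<in> K \<Longrightarrow> y < x \<Longrightarrow> gapr K y \<le> x"
    "\<And>x. x \<in> K \<Longrightarrow> \<not> (gapl K y < x \<and> x < gapr K y)"
proof -
  have ne1: "K \<inter> {..y} \<noteq> {}" using a by auto
  have bd1: "bdd_above (K \<inter> {..y})" by (rule bdd_aboveI[of _ y]) auto
  have cl1: "closed (K \<inter> {..y})" using K by (intro closed_Int) auto
  have ne2: "K \<inter> {y..} \<noteq> {}" using b by auto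
  have bd2: "bdd_below (K \<inter> {y..})" by (rule bdd_belowI[of _ y]) auto
  have cl2: "closed (K \<inter> {y..})" using K by (intro closed_Int) auto
  have g1: "gapl K y \<in> K \<inter> {..y}" unfolding gapl_def by (rule closed_contains_Sup[OF ne1 bd1 cl1])
  have g2: "gapr K y \<in> K \<inter> {y..}" unfolding gapr_def by (rule closed_contains_Inf[OF ne2 bd2 cl2])
  show L: "\<And>x. x \<in> K \<Longrightarrow> x < y \<Longrightarrow> x \<le> gapl K y"
    unfolding gapl_def by (rule cSup_upper) (use bd1 in auto)
  show R: "\<And>x. x \<in> K \<Longrightarrow> y < x \<Longrightarrow> gapr K y \<le> x"
    unfolding gapr_def by (rule cInf_lower) (use bd2 in auto)
  show "gapl K y \<in> K" "gapr K y \<in> K" using g1 g2 by auto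
  show "gapl K y < y" using g1 y by (cases "gapl K y = y") auto
  show "y < gapr K y" using g2 y by (cases "gapr K y = y") auto
  show "a \<le> gapl K y" using L a by blast
  show "gapr K y \<le> b" using R b by blast
  show "\<And>x. x \<in> K \<Longrightarrow> \<not> (gapl K y < x \<and> x < gapr K y)"
  proof
    fix x assume x: "x \<in> K" "gapl K y < x \<and> x < gapr K y"
    show False
    proof (cases "x < y")
      case True then show False using L[OF x(1)] x by simp
    next
      case False
      then have "y < x" using x y by (cases "x = y") auto
      then show False using R[OF x(1)] x by simp
    qed
  qed
qed

lemma path_excl:
  assumes T: "tree_ok K a b c d" and P: "is_path ns" and nm: "n < m"
    and z: "c (ns n) < z" "z < d (ns n)"
  shows "z < a (ns m) \<or> b (ns m) < z"
proof -
  obtain \<beta> where \<beta>: "ns (Suc n) = \<beta> # ns n" using P by (rule path_step)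
  have "a (ns (Suc n)) \<le> a (ns m)" using tree_inc[OF T P] nm by (simp add: incseq_def)
  moreover have "b (ns m) \<le> b (ns (Suc n))" using tree_dec[OF T P] nm by (simp add: decseq_def)
  ultimately show ?thesis using \<beta> z tree_facts(8,9)[OF T, where s="ns n"] by (cases \<beta>) auto
qed

lemma path_limits:
  assumes T: "tree_ok K a b c d" and P: "is_path ns" and K: "closed K"
  obtains \<alpha> \<beta> where "(\<lambda>n. a (ns n)) \<longlonglongrightarrow> \<alpha>" "(\<lambda>n. b (ns n)) \<longlonglongrightarrow> \<beta>" "\<And>n. a (ns n) \<le> \<alpha>"
    "\<And>n. \<beta> \<le> b (ns n)" "\<alpha> \<le> \<beta>" "\<alpha> \<in> K" "\<beta> \<in> K"
proof -
  have bnd: "\<forall>i. a (ns i) \<le> b (ns 0)" using tree_a_le_b[OF T P] by simp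
  obtain \<alpha> where A: "(\<lambda>n. a (ns n)) \<longlonglongrightarrow> \<alpha>" "\<forall>i. a (ns i) \<le> \<alpha>"
    by (rule incseq_convergent[OF tree_inc[OF T P] bnd])
  have bnd2: "\<forall>i. a (ns 0) \<le> b (ns i)" using tree_a_le_b[OF T P] by simp
  obtain \<beta> where B: "(\<lambda>n. b (ns n)) \<longlonglongrightarrow> \<beta>" "\<forall>i. \<beta> \<le> b (ns i)"
    by (rule decseq_convergent[OF tree_dec[OF T P] bnd2])
  have "\<alpha> \<le> \<beta>"
  proof (rule LIMSEQ_le[OF A(1) B(1)])
    show "\<exists>N. \<forall>n\<ge>N. a (ns n) \<le> b (ns n)" using tree_a_le_b[OF T P] by blast
  qed
  moreover have "\<alpha> \<in> K"
    using closed_sequentially[OF K _ A(1)] tree_facts(1)[OF T] by blast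
  moreover have "\<beta> \<in> K"
    using closed_sequentially[OF K _ B(1)] tree_facts(2)[OF T] by blast
  ultimately show ?thesis using that A B by blast
qed

section \<open>Trees for Cantor sets\<close>

definition kC :: "real set \<Rightarrow> real \<Rightarrow> real \<Rightarrow> nat" where
  "kC C a b = (LEAST k. a < rq k \<and> rq k < b \<and> rq k \<notin> C)"
definition yC :: "real set \<Rightarrow> real \<Rightarrow> real \<Rightarrow> real" where "yC C a b = rq (kC C a b)"

fun pc :: "real set \<Rightarrow> bool list \<Rightarrow> real \<times> real" where
  "pc C [] = (Inf C, Sup C)"
| "pc C (\<beta> # l) = (if \<beta> then (gapr C (yC C (fst (pc C l)) (snd (pc C l))), snd (pc C l))
     else (fst (pc C l), gapl C (yC C (fst (pc C l)) (snd (pc C l)))))"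

definition "aC C l = fst (pc C l)"
definition "bC C l = snd (pc C l)"
definition "cC C l = gapl C (yC C (aC C l) (bC C l))"
definition "dC C l = gapr C (yC C (aC C l) (bC C l))"

definition invC :: "real set \<Rightarrow> real \<Rightarrow> real \<Rightarrow> bool" where
  "invC C a b \<longleftrightarrow> a < b \<and> a \<in> C \<and> b \<in> C \<and> (\<forall>e>0. \<exists>z\<in>C. a < z \<and> z < a + e) \<and> (\<forall>e>0. \<exists>z\<in>C. b - e < z \<and> z < b)"

lemma cs_closed: fixes C :: "real set" shows "cantor_set C \<Longrightarrow> closed C"
  unfolding cantor_set_def using compact_imp_closed by blast

lemma cs_limpt:
  fixes C :: "real set"
  assumes C: "cantor_set C" and x: "x \<in> C" and e: "e > 0"
  shows "\<exists>z\<in>C. z \<noteq> x \<and> \<bar>z - x\<bar> < e"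
proof -
  have "x islimpt C" using C x unfolding cantor_set_def perfect_set_def by blast
  then show ?thesis using e unfolding islimpt_approachable dist_real_def by blast
qed

lemma cs_noint: fixes C :: "real set" shows "cantor_set C \<Longrightarrow> a < b \<Longrightarrow> \<exists>z. a < z \<and> z < b \<and> z \<notin> C"
proof (rule ccontr)
  assume C: "cantor_set C" and ab: "a < b" and "\<not> (\<exists>z. a < z \<and> z < b \<and> z \<notin> C)"
  then have sub: "{a<..<b} \<subseteq> C" by auto
  have "connected {a<..<b}" by simp
  then obtain x where "{a<..<b} \<subseteq> {x}" using C sub unfolding cantor_set_def totally_disconnected_def by blast
  moreover have "(2*a+b)/3 \<in> {a<..<b}" "(a+2*b)/3 \<in> {a<..<b}" using ab by auto
  ultimately have "(2*a+b)/3 = x" "(a+2*b)/3 = x" by blast+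
  then show False using ab by (auto simp: field_simps)
qed

lemma cs_step:
  fixes C :: "real set"
  assumes C: "cantor_set C" and I: "invC C a b"
  shows "a < yC C a b" "yC C a b < b" "yC C a b \<notin> C"
    "invC C a (gapl C (yC C a b))" "invC C (gapr C (yC C a b)) b"
proof -
  have cl: "closed C" using C by (rule cs_closed)
  have "a < b" using I by (simp add: invC_def)
  then obtain z where z: "a < z" "z < b" "z \<notin> C" using cs_noint[OF C] by blast
  have op: "open ({a<..<b} - C)" using cl by (intro open_Diff) auto
  have "z \<in> {a<..<b} - C" using z by simp
  then obtain k where k: "rq k \<in> {a<..<b} - C" using rq_open[OF op] by blast
  have ex: "a < rq k \<and> rq k < b \<and> rq k \<notin> C" using k by auto
  have Y: "a < yC C a b \<and> yC C a b < b \<and> yC C a b \<notin> C"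
    unfolding yC_def kC_def by (rule LeastI[of "\<lambda>k. a < rq k \<and> rq k < b \<and> rq k \<notin> C", OF ex])
  then show y: "a < yC C a b" "yC C a b < b" "yC C a b \<notin> C" by auto
  define y where "y = yC C a b"
  have ab: "a \<in> C" "b \<in> C" using I by (auto simp: invC_def)
  note G = gap_props[OF cl ab(1) y(1) ab(2) y(2) y(3), folded y_def]
  show "invC C a (gapl C (yC C a b))"
    unfolding y_def[symmetric] invC_def
  proof (intro conjI allI impI)
    have "\<forall>e>0. \<exists>z\<in>C. a < z \<and> z < a + e" using I by (simp add: invC_def)
    then obtain z where z: "z \<in> C" "a < z" "z < a + (y - a)" using y(1) unfolding y_def by (meson diff_gt_0_iff_gt)
    then show "a < gapl C y" using G(7)[of z] by simp
    show "a \<in> C" "gapl C y \<in> C" using ab G by auto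
    show "\<exists>z\<in>C. a < z \<and> z < a + e" if "e > 0" for e using I that by (auto simp: invC_def)
    show "\<exists>z\<in>C. gapl C y - e < z \<and> z < gapl C y" if e: "e > 0" for e
    proof -
      obtain z where z: "z \<in> C" "z \<noteq> gapl C y" "\<bar>z - gapl C y\<bar> < min e (y - gapl C y)"
        using cs_limpt[OF C G(1), of "min e (y - gapl C y)"] e G(3) by auto
      have "\<not> gapl C y < z"
      proof
        assume "gapl C y < z"
        then have "z < y" using z by auto
        then show False using G(7)[OF z(1)] \<open>gapl C y < z\<close> by simp
      qed
      then have "z < gapl C y" using z(2) by simp
      then show ?thesis using z by (intro bexI[of _ z]) auto
    qed
  qed
  show "invC C (gapr C (yC C a b)) b"
    unfolding y_def[symmetric] invC_def
  proof (intro conjI allI impI)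
    have "\<forall>e>0. \<exists>z\<in>C. b - e < z \<and> z < b" using I by (simp add: invC_def)
    then obtain z where z: "z \<in> C" "b - (b - y) < z" "z < b" using y(2) unfolding y_def by (meson diff_gt_0_iff_gt)
    then show "gapr C y < b" using G(8)[of z] by simp
    show "b \<in> C" "gapr C y \<in> C" using ab G by auto
    show "\<exists>z\<in>C. b - e < z \<and> z < b" if "e > 0" for e using I that by (auto simp: invC_def)
    show "\<exists>z\<in>C. gapr C y < z \<and> z < gapr C y + e" if e: "e > 0" for e
    proof -
      obtain z where z: "z \<in> C" "z \<noteq> gapr C y" "\<bar>z - gapr C y\<bar> < min e (gapr C y - y)"
        using cs_limpt[OF C G(6), of "min e (gapr C y - y)"] e G(4) by auto
      have "\<not> z < gapr C y"
      proof
        assume "z < gapr C y"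
        then have "y < z" using z by auto
        then show False using G(8)[OF z(1)] \<open>z < gapr C y\<close> by simp
      qed
      then have "gapr C y < z" using z(2) by simp
      then show ?thesis using z by (intro bexI[of _ z]) auto
    qed
  qed
qed

lemma compact_inf_sup:
  fixes C :: "real set"
  assumes "compact C" "C \<noteq> {}"
  shows "Inf C \<in> C" "Sup C \<in> C" "\<And>x. x \<in> C \<Longrightarrow> Inf C \<le> x" "\<And>x. x \<in> C \<Longrightarrow> x \<le> Sup C"
proof -
  have b: "bounded C" using assms compact_imp_bounded by blast
  have bb: "bdd_below C" "bdd_above C" using b bounded_imp_bdd_below bounded_imp_bdd_above by auto
  have cl: "closed C" using assms compact_imp_closed by blast
  show "Inf C \<in> C" by (rule closed_contains_Inf[OF assms(2) bb(1) cl])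
  show "Sup C \<in> C" by (rule closed_contains_Sup[OF assms(2) bb(2) cl])
  show "\<And>x. x \<in> C \<Longrightarrow> Inf C \<le> x" using bb by (intro cInf_lower) auto
  show "\<And>x. x \<in> C \<Longrightarrow> x \<le> Sup C" using bb by (intro cSup_upper) auto
qed

lemma cs_root:
  fixes C :: "real set"
  assumes C: "cantor_set C"
  shows "invC C (Inf C) (Sup C)"
proof -
  have cC: "compact C" "C \<noteq> {}" using C by (auto simp: cantor_set_def)
  note IS = compact_inf_sup[OF cC]
  obtain z where z: "z \<in> C" "z \<noteq> Inf C" using cs_limpt[OF C IS(1), of 1] by auto
  have "Inf C < Sup C" using IS(3)[OF z(1)] IS(4)[OF z(1)] z(2) by linarith
  moreover have "\<exists>z\<in>C. Inf C < z \<and> z < Inf C + e" if e: "e > 0" for e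
  proof -
    obtain z where z: "z \<in> C" "z \<noteq> Inf C" "\<bar>z - Inf C\<bar> < e" using cs_limpt[OF C IS(1) e] by auto
    have "Inf C < z" using IS(3)[OF z(1)] z(2) by linarith
    then show ?thesis using z by (intro bexI[of _ z]) auto
  qed
  moreover have "\<exists>z\<in>C. Sup C - e < z \<and> z < Sup C" if e: "e > 0" for e
  proof -
    obtain z where z: "z \<in> C" "z \<noteq> Sup C" "\<bar>z - Sup C\<bar> < e" using cs_limpt[OF C IS(2) e] by auto
    have "z < Sup C" using IS(4)[OF z(1)] z(2) by linarith
    then show ?thesis using z by (intro bexI[of _ z]) auto
  qed
  ultimately show ?thesis using IS by (simp add: invC_def)
qed

lemma pc_inv:
  fixes C :: "real set"
  assumes C: "cantor_set C"
  shows "invC C (aC C l) (bC C l)"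
proof (induct l)
  case Nil then show ?case using cs_root[OF C] by (simp add: aC_def bC_def)
next
  case (Cons \<beta> l)
  then show ?case using cs_step(4,5)[OF C Cons] by (cases \<beta>) (auto simp: aC_def bC_def)
qed

lemma cC_tree_ok:
  fixes C :: "real set"
  assumes C: "cantor_set C"
  shows "tree_ok C (aC C) (bC C) (cC C) (dC C)"
  unfolding tree_ok_def
proof (intro allI conjI ballI)
  fix l
  have I: "invC C (aC C l) (bC C l)" by (rule pc_inv[OF C])
  note S = cs_step[OF C I]
  have cl: "closed C" by (rule cs_closed[OF C])
  have ab: "aC C l \<in> C" "bC C l \<in> C" using I by (auto simp: invC_def)
  note G = gap_props[OF cl ab(1) S(1) ab(2) S(2) S(3)]
  show "aC C l \<in> C" "bC C l \<in> C" using ab by auto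
  show "aC C l < cC C l" using S(4) by (simp add: invC_def cC_def)
  show "cC C l \<le> dC C l" using G(3,4) by (simp add: cC_def dC_def)
  show "dC C l < bC C l" using S(5) by (simp add: invC_def dC_def)
  show "\<And>x. x \<in> C \<Longrightarrow> \<not> (cC C l < x \<and> x < dC C l)" using G(9) by (simp add: cC_def dC_def)
  show "aC C (False # l) = aC C l" "bC C (False # l) = cC C l" "aC C (True # l) = dC C l" "bC C (True # l) = bC C l"
    by (simp_all add: aC_def bC_def cC_def dC_def)
qed

lemma cC_tree:
  fixes C :: "real set"
  assumes C: "cantor_set C"
  shows "is_tree C (aC C) (bC C) (cC C) (dC C)"
  unfolding is_tree_def
proof (intro conjI allI impI)
  have cC: "compact C" "C \<noteq> {}" using C by (auto simp: cantor_set_def)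
  show "C \<subseteq> {aC C []..bC C []}" using compact_inf_sup[OF cC] by (auto simp: aC_def bC_def)
  show T: "tree_ok C (aC C) (bC C) (cC C) (dC C)" by (rule cC_tree_ok[OF C])
  fix ns :: "nat \<Rightarrow> bool list" assume P: "is_path ns"
  have cl: "closed C" by (rule cs_closed[OF C])
  obtain \<alpha> \<beta> where L: "(\<lambda>n. aC C (ns n)) \<longlonglongrightarrow> \<alpha>" "(\<lambda>n. bC C (ns n)) \<longlonglongrightarrow> \<beta>" "\<And>n. aC C (ns n) \<le> \<alpha>"
    "\<And>n. \<beta> \<le> bC C (ns n)" "\<alpha> \<le> \<beta>" "\<alpha> \<in> C" "\<beta> \<in> C"
    using path_limits[OF T P cl] by blast
  have "\<alpha> = \<beta>"
  proof (rule ccontr)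
    assume "\<alpha> \<noteq> \<beta>"
    then have ab: "\<alpha> < \<beta>" using L(5) by simp
    obtain z where z: "\<alpha> < z" "z < \<beta>" "z \<notin> C" using cs_noint[OF C ab] by blast
    have op: "open ({\<alpha><..<\<beta>} - C)" using cl by (intro open_Diff) auto
    have "z \<in> {\<alpha><..<\<beta>} - C" using z by simp
    then obtain j where j: "rq j \<in> {\<alpha><..<\<beta>} - C" using rq_open[OF op] by blast
    define k where "k n = kC C (aC C (ns n)) (bC C (ns n))" for n
    have kj: "k n \<le> j" for n
    proof -
      have "aC C (ns n) < rq j \<and> rq j < bC C (ns n) \<and> rq j \<notin> C" using j L(3,4)[of n] by force
      then show ?thesis unfolding k_def kC_def by (rule Least_le)
    qed
    have dist: "k n \<noteq> k m" if nm: "n < m" for n m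
    proof
      assume eq: "k n = k m"
      have I: "invC C (aC C (ns n)) (bC C (ns n))" by (rule pc_inv[OF C])
      have Im: "invC C (aC C (ns m)) (bC C (ns m))" by (rule pc_inv[OF C])
      have ab1: "aC C (ns n) \<in> C" "bC C (ns n) \<in> C" using I by (auto simp: invC_def)
      note S = cs_step[OF C I]
      note G = gap_props[OF cl ab1(1) S(1) ab1(2) S(2) S(3)]
      have "cC C (ns n) < rq (k n)" "rq (k n) < dC C (ns n)"
        using G(3,4) by (simp_all add: cC_def dC_def yC_def k_def)
      then have "rq (k n) < aC C (ns m) \<or> bC C (ns m) < rq (k n)" by (rule path_excl[OF T P nm])
      moreover have "aC C (ns m) < rq (k m)" "rq (k m) < bC C (ns m)"
        using cs_step(1,2)[OF C Im] by (simp_all add: yC_def k_def)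
      ultimately show False using eq by auto
    qed
    show False by (rule rank_contra[of UNIV k j]) (use kj dist in auto)
  qed
  have "(\<lambda>n. bC C (ns n) - aC C (ns n)) \<longlonglongrightarrow> \<beta> - \<alpha>" by (intro tendsto_diff L(1,2))
  then show "(\<lambda>n. bC C (ns n) - aC C (ns n)) \<longlonglongrightarrow> 0" using \<open>\<alpha> = \<beta>\<close> by simp
qed

theorem cantor_homeomorphic_A3:
  fixes C :: "real set"
  assumes C: "cantor_set C"
  shows "C homeomorphic A3"
proof (rule tree_homeomorphic[OF cC_tree[OF C] A3_tree])
  fix s
  have "cC C s < dC C s"
  proof -
    have I: "invC C (aC C s) (bC C s)" by (rule pc_inv[OF C])
    have cl: "closed C" by (rule cs_closed[OF C])
    have ab1: "aC C s \<in> C" "bC C s \<in> C" using I by (auto simp: invC_def)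
    note S = cs_step[OF C I]
    note G = gap_props[OF cl ab1(1) S(1) ab1(2) S(2) S(3)]
    show ?thesis using G(3,4) by (simp add: cC_def dC_def)
  qed
  moreover have "c3 s < d3 s" using cn_pos[of s] by (simp add: c3_def d3_def)
  ultimately show "cC C s = dC C s \<longleftrightarrow> c3 s = d3 s" by simp
  show "compact C" using C by (simp add: cantor_set_def)
  show "compact A3" by (rule A3_compact)
qed

section \<open>The Guthrie--Nymann Cantorval\<close>

definition ge :: "nat \<Rightarrow> real" where "ge k = 3 * (1/4)^(k+1)"
definition go :: "nat \<Rightarrow> real" where "go k = 2 * (1/4)^(k+1)"
definition vg :: "nat \<Rightarrow> real" where
  "vg n = (if even n then ge (n div 2) else 0) + (if odd n then go (n div 2) else 0)"

lemma geo_quarter: "(\<lambda>k. c * (1/4::real)^(k+1)) sums (c/3)"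
proof -
  have "(\<lambda>n. (1/4::real)^n) sums (1 / (1 - 1/4))" by (rule geometric_sums) simp
  then have "(\<lambda>n. (c/4) * (1/4::real)^n) sums ((c/4) * (1 / (1 - 1/4)))" by (rule sums_mult)
  then show ?thesis by simp
qed

lemma ge_sums: "ge sums 1" using geo_quarter[of 3] unfolding ge_def by simp
lemma go_sums: "go sums (2/3)" using geo_quarter[of 2] unfolding go_def by simp

lemma vg_sums: "vg sums (5/3)"
proof -
  have "vg sums (1 + 2/3)" unfolding vg_def by (intro sums_add sums_even sums_odd ge_sums go_sums)
  then show ?thesis by simp
qed

lemma vg_suminf: "(\<Sum>n. vg n) = 5/3" by (rule sums_unique[OF vg_sums, symmetric])

lemma vg_nn: "0 \<le> vg n" by (simp add: vg_def ge_def go_def)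

lemma vg_summable: "summable (\<lambda>n. norm (vg n))"
  using vg_sums vg_nn by (simp add: sums_iff)

lemma vg_step: "vg (Suc (Suc n)) = (1/4) * vg n"
  by (simp add: vg_def ge_def go_def)

lemma vg_0: "vg 0 = 3/4" by (simp add: vg_def ge_def)
lemma vg_1: "vg 1 = 1/2" by (simp add: vg_def go_def)

definition GN where "GN = achievement_set vg"

lemma GN_split: "GN = (\<lambda>t. t/4) ` GN \<union> (\<lambda>t. 1/2 + t/4) ` GN \<union> (\<lambda>t. 3/4 + t/4) ` GN \<union> (\<lambda>t. 5/4 + t/4) ` GN"
proof -
  define w where "w n = vg (Suc n)" for n
  have sw: "summable (\<lambda>n. norm (w n))" unfolding w_def by (rule summable_shift_norm[OF vg_summable])
  have wf: "(\<lambda>n. vg (Suc n)) = w" by (simp add: w_def fun_eq_iff)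
  have e1: "GN = achievement_set w \<union> (\<lambda>t. 3/4 + t) ` achievement_set w"
    unfolding GN_def using ach_split_first[OF vg_summable] unfolding wf vg_0 .
  have w0: "w 0 = 1/2" by (simp add: w_def vg_def go_def)
  have e2: "achievement_set w = achievement_set (\<lambda>n. w (Suc n)) \<union> (\<lambda>t. 1/2 + t) ` achievement_set (\<lambda>n. w (Suc n))"
    using ach_split_first[OF sw] unfolding w0 .
  have "(\<lambda>n. w (Suc n)) = (\<lambda>n. (1/4) * vg n)" unfolding w_def by (simp add: vg_step)
  then have e3: "achievement_set (\<lambda>n. w (Suc n)) = (\<lambda>t. (1/4) * t) ` GN"
    unfolding GN_def using ach_scale[OF vg_summable, of "1/4"] by (simp only:)
  define Q where "Q = achievement_set (\<lambda>n. w (Suc n))"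
  have "GN = (Q \<union> (\<lambda>t. 1/2 + t) ` Q) \<union> (\<lambda>t. 3/4 + t) ` (Q \<union> (\<lambda>t. 1/2 + t) ` Q)"
    using e1 e2 unfolding Q_def by simp
  then have "GN = ((\<lambda>t. (1/4) * t) ` GN \<union> (\<lambda>t. 1/2 + t) ` ((\<lambda>t. (1/4) * t) ` GN)) \<union>
      (\<lambda>t. 3/4 + t) ` ((\<lambda>t. (1/4) * t) ` GN \<union> (\<lambda>t. 1/2 + t) ` ((\<lambda>t. (1/4) * t) ` GN))"
    unfolding Q_def e3 .
  then show ?thesis
    by (rule trans) (auto simp: image_Un image_image add.assoc)
qed

lemma GN_sub: "GN \<subseteq> {0..5/3}"
  using ach_bounds[OF vg_summable vg_nn] unfolding GN_def vg_suminf .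

lemma GN_compact: "compact GN" unfolding GN_def by (rule compact_achievement_set[OF vg_summable])
lemma GN_closed: "closed GN" using GN_compact compact_imp_closed by blast

lemma GN_symm: "t \<in> GN \<Longrightarrow> 5/3 - t \<in> GN"
  using ach_symm[OF vg_summable] unfolding GN_def vg_suminf .

lemma GN_0: "0 \<in> GN" unfolding GN_def by (rule ach_zero)
lemma GN_53: "5/3 \<in> GN" using GN_symm[OF GN_0] by simp

lemma GN_23: "2/3 \<in> GN"
proof -
  have "(\<lambda>n. if odd n then go (n div 2) else 0) sums (2/3)" by (rule sums_odd[OF go_sums])
  moreover have "(\<lambda>n. if odd n then go (n div 2) else 0) = (\<lambda>n. if odd n then vg n else 0)"
    by (auto simp: vg_def)
  ultimately have "asum vg odd = 2/3" unfolding asum_real by (simp add: sums_iff)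
  then show ?thesis unfolding GN_def achievement_set_eq by (metis rangeI)
qed

lemma GN_1: "1 \<in> GN" using GN_symm[OF GN_23] by simp

lemma GN_sup: "(\<lambda>t. t/4) ` GN \<union> (\<lambda>t. 1/2 + t/4) ` GN \<union> (\<lambda>t. 3/4 + t/4) ` GN \<union> (\<lambda>t. 5/4 + t/4) ` GN \<subseteq> GN"
  by (rule equalityD2[OF GN_split])
lemma GN_q: "t \<in> GN \<Longrightarrow> t/4 \<in> GN" using GN_sup by blast
lemma GN_h: "t \<in> GN \<Longrightarrow> 1/2 + t/4 \<in> GN" using GN_sup by blast
lemma GN_t: "t \<in> GN \<Longrightarrow> 3/4 + t/4 \<in> GN" using GN_sup by blast
lemma GN_f: "t \<in> GN \<Longrightarrow> 5/4 + t/4 \<in> GN" using GN_sup by blast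

lemma GN_cases:
  assumes "x \<in> GN"
  obtains t where "t \<in> GN" "x = t/4" | t where "t \<in> GN" "x = 1/2 + t/4"
    | t where "t \<in> GN" "x = 3/4 + t/4" | t where "t \<in> GN" "x = 5/4 + t/4"
proof -
  have H: "GN \<subseteq> (\<lambda>t. t/4) ` GN \<union> (\<lambda>t. 1/2 + t/4) ` GN \<union> (\<lambda>t. 3/4 + t/4) ` GN \<union> (\<lambda>t. 5/4 + t/4) ` GN"
    by (rule equalityD1[OF GN_split])
  have "x \<in> (\<lambda>t. t/4) ` GN \<union> (\<lambda>t. 1/2 + t/4) ` GN \<union> (\<lambda>t. 3/4 + t/4) ` GN \<union> (\<lambda>t. 5/4 + t/4) ` GN"
    by (rule subsetD[OF H assms])
  then show ?thesis using that by blast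
qed

definition "LL = GN \<inter> {0..2/3}"
definition "RR = GN \<inter> {1..5/3}"

lemma LL_q: "t \<in> GN \<Longrightarrow> t/4 \<in> LL" using GN_q GN_sub by (force simp: LL_def)
lemma LL_h: "t \<in> LL \<Longrightarrow> 1/2 + t/4 \<in> LL" using GN_h by (auto simp: LL_def)

lemma interval_part: "{2/3..1} \<subseteq> GN"
proof -
  define S where "S = {t \<in> {0..2/3}. t \<in> LL \<or> 2/3 - t \<in> LL} \<union> {t \<in> {2/3..1}. t \<in> GN}"
  have clL: "closed LL" unfolding LL_def using GN_closed by (intro closed_Int) auto
  have c1: "closed {t \<in> {0..2/3}. 2/3 - t \<in> LL}"
  proof -
    have "{t \<in> {0..2/3}. 2/3 - t \<in> LL} = {0..2/3} \<inter> (\<lambda>t. 2/3 - t) -` LL" by auto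
    moreover have "closed ((\<lambda>t::real. 2/3 - t) -` LL)"
      by (rule continuous_closed_vimage[OF clL]) (auto intro!: continuous_intros)
    ultimately show ?thesis by (metis closed_Int closed_atLeastAtMost)
  qed
  have "{t \<in> {0..2/3}. t \<in> LL} = {0..2/3} \<inter> LL" by auto
  then have c2: "closed {t \<in> {0..2/3}. t \<in> LL}" using clL by (metis closed_Int closed_atLeastAtMost)
  have "{t \<in> {2/3..1}. t \<in> GN} = {2/3..1} \<inter> GN" by auto
  then have c3: "closed {t \<in> {2/3..1}. t \<in> GN}" using GN_closed by (metis closed_Int closed_atLeastAtMost)
  have eqS: "S = {t \<in> {0..2/3}. t \<in> LL} \<union> {t \<in> {0..2/3}. 2/3 - t \<in> LL} \<union> {t \<in> {2/3..1}. t \<in> GN}"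
    unfolding S_def by auto
  have clS: "closed S" unfolding eqS using c1 c2 c3 by (intro closed_Un) auto
  have subS: "S \<subseteq> {0..1}" unfolding S_def by auto
  have L23: "2/3 \<in> LL" using GN_23 by (simp add: LL_def)
  have p: "2/3 \<in> S" using L23 unfolding S_def by auto
  have SL: "w \<in> S \<Longrightarrow> w \<le> 2/3 \<Longrightarrow> w \<in> LL \<or> 2/3 - w \<in> LL" for w unfolding S_def using L23 by (auto simp: LL_def)
  have SG: "w \<in> GN" if w: "w \<in> S" "2/3 \<le> w" for w
  proof (cases "w \<le> 2/3")
    case True
    then have "w = 2/3" using w by linarith
    then show ?thesis using GN_23 by (simp only:)
  next
    case False then show ?thesis using w unfolding S_def by auto
  qed
  have Lsub: "LL \<subseteq> GN" by (auto simp: LL_def)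
  have mkL: "s \<in> {0..2/3} \<Longrightarrow> s \<in> LL \<or> 2/3 - s \<in> LL \<Longrightarrow> s \<in> S" for s unfolding S_def by auto
  have mkG: "s \<in> {2/3..1} \<Longrightarrow> s \<in> GN \<Longrightarrow> s \<in> S" for s unfolding S_def by auto
  have symL: "w \<in> LL \<Longrightarrow> 5/3 - w \<in> GN" for w using GN_symm by (auto simp: LL_def)
  have tile: "\<exists>u D. u \<in> D \<and> (D = {0..2/3} \<or> D = {2/3..1}) \<and> (\<forall>w\<in>S \<inter> D. \<exists>s\<in>S. \<bar>s - t\<bar> \<le> \<bar>w - u\<bar> / 4)"
    if t: "t \<in> {0..1}" for t
  proof -
    consider "t \<le> 1/6" | "1/6 \<le> t" "t \<le> 1/4" | "1/4 \<le> t" "t \<le> 5/12" | "5/12 \<le> t" "t \<le> 1/2"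
      | "1/2 \<le> t" "t \<le> 2/3" | "2/3 \<le> t" "t \<le> 3/4" | "3/4 \<le> t" "t \<le> 11/12" | "11/12 \<le> t" by linarith
    then show ?thesis
    proof cases
      case 1
      show ?thesis
      proof (intro exI[of _ "4*t"] exI[of _ "{0..2/3::real}"] conjI ballI)
        fix w assume w: "w \<in> S \<inter> {0..2/3}"
        have "w/4 \<in> S"
        proof (rule mkL)
          show "w/4 \<in> {0..2/3}" using w by auto
          have "w \<in> LL \<or> 2/3 - w \<in> LL" using SL[of w] w by auto
          then show "w/4 \<in> LL \<or> 2/3 - w/4 \<in> LL"
          proof
            assume "w \<in> LL" then show ?thesis using LL_q Lsub by blast
          next
            assume "2/3 - w \<in> LL"
            then have "1/2 + (2/3 - w)/4 \<in> LL" by (rule LL_h)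
            moreover have "1/2 + (2/3 - w)/4 = 2/3 - w/4" by (simp add: field_simps)
            ultimately show ?thesis by simp
          qed
        qed
        then show "\<exists>s\<in>S. \<bar>s - t\<bar> \<le> \<bar>w - 4*t\<bar> / 4" by (intro bexI[of _ "w/4"]) (auto simp: abs_if)
      qed (use t 1 in auto)
    next
      case 2
      show ?thesis
      proof (intro exI[of _ "4*t"] exI[of _ "{2/3..1::real}"] conjI ballI)
        fix w assume w: "w \<in> S \<inter> {2/3..1}"
        have "w/4 \<in> S" using mkL[of "w/4"] w SG[of w] LL_q[of w] by auto
        then show "\<exists>s\<in>S. \<bar>s - t\<bar> \<le> \<bar>w - 4*t\<bar> / 4" by (intro bexI[of _ "w/4"]) (auto simp: abs_if)
      qed (use t 2 in auto)
    next
      case 3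
      show ?thesis
      proof (intro exI[of _ "4*t - 1"] exI[of _ "{0..2/3::real}"] conjI ballI)
        fix w assume w: "w \<in> S \<inter> {0..2/3}"
        have "(1+w)/4 \<in> S"
        proof (rule mkL)
          show "(1+w)/4 \<in> {0..2/3}" using w by auto
          have "w \<in> LL \<or> 2/3 - w \<in> LL" using SL[of w] w by auto
          then show "(1+w)/4 \<in> LL \<or> 2/3 - (1+w)/4 \<in> LL"
          proof
            assume "w \<in> LL"
            then have "(5/3 - w)/4 \<in> LL" using symL LL_q by blast
            moreover have "(5/3 - w)/4 = 2/3 - (1+w)/4" by (simp add: field_simps)
            ultimately show ?thesis by simp
          next
            assume "2/3 - w \<in> LL"
            then have "(5/3 - (2/3 - w))/4 \<in> LL" using symL LL_q by blast
            moreover have "(5/3 - (2/3 - w))/4 = (1+w)/4" by (simp add: field_simps)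
            ultimately show ?thesis by simp
          qed
        qed
        moreover have "(1+w)/4 - t = (w - (4*t - 1)) / 4" by (simp add: field_simps)
        then have "\<bar>(1+w)/4 - t\<bar> \<le> \<bar>w - (4*t - 1)\<bar> / 4" by (simp only: abs_divide)
        ultimately show "\<exists>s\<in>S. \<bar>s - t\<bar> \<le> \<bar>w - (4*t - 1)\<bar> / 4" by blast
      qed (use t 3 in auto)
    next
      case 4
      show ?thesis
      proof (intro exI[of _ "8/3 - 4*t"] exI[of _ "{2/3..1::real}"] conjI ballI)
        fix w assume w: "w \<in> S \<inter> {2/3..1}"
        have "2/3 - w/4 \<in> S"
        proof (rule mkL)
          show "2/3 - w/4 \<in> {0..2/3}" using w by auto
          show "2/3 - w/4 \<in> LL \<or> 2/3 - (2/3 - w/4) \<in> LL" using SG[of w] w LL_q[of w] by auto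
        qed
        then show "\<exists>s\<in>S. \<bar>s - t\<bar> \<le> \<bar>w - (8/3 - 4*t)\<bar> / 4" by (intro bexI[of _ "2/3 - w/4"]) (auto simp: abs_if)
      qed (use t 4 in auto)
    next
      case 5
      show ?thesis
      proof (intro exI[of _ "4*t - 2"] exI[of _ "{0..2/3::real}"] conjI ballI)
        fix w assume w: "w \<in> S \<inter> {0..2/3}"
        have "1/2 + w/4 \<in> S"
        proof (rule mkL)
          show "1/2 + w/4 \<in> {0..2/3}" using w by auto
          have "w \<in> LL \<or> 2/3 - w \<in> LL" using SL[of w] w by auto
          then show "1/2 + w/4 \<in> LL \<or> 2/3 - (1/2 + w/4) \<in> LL"
          proof
            assume "w \<in> LL" then show ?thesis using LL_h by blast
          next
            assume "2/3 - w \<in> LL"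
            then have "(2/3 - w)/4 \<in> LL" using LL_q Lsub by blast
            moreover have "(2/3 - w)/4 = 2/3 - (1/2 + w/4)" by (simp add: field_simps)
            ultimately show ?thesis by simp
          qed
        qed
        then show "\<exists>s\<in>S. \<bar>s - t\<bar> \<le> \<bar>w - (4*t - 2)\<bar> / 4" by (intro bexI[of _ "1/2 + w/4"]) (auto simp: abs_if)
      qed (use t 5 in auto)
    next
      case 6
      show ?thesis
      proof (intro exI[of _ "4*t - 2"] exI[of _ "{2/3..1::real}"] conjI ballI)
        fix w assume w: "w \<in> S \<inter> {2/3..1}"
        have "1/2 + w/4 \<in> S" using mkG[of "1/2 + w/4"] w SG[of w] GN_h[of w] by auto
        then show "\<exists>s\<in>S. \<bar>s - t\<bar> \<le> \<bar>w - (4*t - 2)\<bar> / 4" by (intro bexI[of _ "1/2 + w/4"]) (auto simp: abs_if)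
      qed (use t 6 in auto)
    next
      case 7
      show ?thesis
      proof (intro exI[of _ "4*t - 3"] exI[of _ "{0..2/3::real}"] conjI ballI)
        fix w assume w: "w \<in> S \<inter> {0..2/3}"
        have "3/4 + w/4 \<in> GN"
        proof -
          have "w \<in> LL \<or> 2/3 - w \<in> LL" using SL[of w] w by auto
          then show ?thesis
          proof
            assume "w \<in> LL" then show ?thesis using GN_t Lsub by blast
          next
            assume "2/3 - w \<in> LL"
            then have "1/2 + (5/3 - (2/3 - w))/4 \<in> GN" using symL GN_h by blast
            moreover have "1/2 + (5/3 - (2/3 - w))/4 = 3/4 + w/4" by (simp add: field_simps)
            ultimately show ?thesis by simp
          qed
        qed
        then have "3/4 + w/4 \<in> S" using mkG[of "3/4 + w/4"] w by auto
        then show "\<exists>s\<in>S. \<bar>s - t\<bar> \<le> \<bar>w - (4*t - 3)\<bar> / 4" by (intro bexI[of _ "3/4 + w/4"]) (auto simp: abs_if)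
      qed (use t 7 in auto)
    next
      case 8
      show ?thesis
      proof (intro exI[of _ "4*t - 3"] exI[of _ "{2/3..1::real}"] conjI ballI)
        fix w assume w: "w \<in> S \<inter> {2/3..1}"
        have "3/4 + w/4 \<in> S" using mkG[of "3/4 + w/4"] w SG[of w] GN_t[of w] by auto
        then show "\<exists>s\<in>S. \<bar>s - t\<bar> \<le> \<bar>w - (4*t - 3)\<bar> / 4" by (intro bexI[of _ "3/4 + w/4"]) (auto simp: abs_if)
      qed (use t 8 in auto)
    qed
  qed
  have "{0..1} \<subseteq> S"
  proof (rule tiling[OF clS subS])
    show "S \<noteq> {}" using p by auto
    fix t :: real assume t: "t \<in> {0..1}"
    obtain u D where uD: "u \<in> D" "D = {0..2/3} \<or> D = {2/3..1}" "\<forall>w\<in>S \<inter> D. \<exists>s\<in>S. \<bar>s - t\<bar> \<le> \<bar>w - u\<bar> / 4"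
      using tile[OF t] by blast
    show "\<exists>u\<in>{0..1}. \<forall>w\<in>S. \<exists>s\<in>S. \<bar>s - t\<bar> \<le> \<bar>w - u\<bar> / 2"
    proof (rule bexI[of _ u], rule ballI)
      fix w assume w: "w \<in> S"
      show "\<exists>s\<in>S. \<bar>s - t\<bar> \<le> \<bar>w - u\<bar> / 2"
      proof (cases "w \<in> D")
        case True
        then obtain s where "s \<in> S" "\<bar>s - t\<bar> \<le> \<bar>w - u\<bar> / 4" using uD w by blast
        then show ?thesis by (intro bexI[of _ s]) auto
      next
        case False
        have "2/3 \<in> S \<inter> D" using uD(2) p by auto
        then obtain s where s: "s \<in> S" "\<bar>s - t\<bar> \<le> \<bar>2/3 - u\<bar> / 4" using uD(3) by blast
        have w01: "0 \<le> w" "w \<le> 1" using w subS by auto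
        have "\<bar>2/3 - u\<bar> \<le> \<bar>w - u\<bar>" using uD(1,2) False w01 by auto
        then show ?thesis using s by (intro bexI[of _ s]) auto
      qed
    qed (use uD in auto)
  qed
  show ?thesis
  proof
    fix x :: real assume "x \<in> {2/3..1}"
    then have "x \<in> {0..1}" "2/3 \<le> x" by auto
    then show "x \<in> GN" using SG \<open>{0..1} \<subseteq> S\<close> by blast
  qed
qed

definition "IRS = GN \<inter> {2/3..5/3}"

lemma LL_sub: "LL \<subseteq> {0..2/3}" by (auto simp: LL_def)
lemma RR_sub: "RR \<subseteq> {1..5/3}" by (auto simp: RR_def)

lemma LL_1: "LL \<inter> {0 + (1/4)*0 .. 0 + (1/4)*(5/3)} = (\<lambda>t. 0 + (1/4)*t) ` GN"
proof
  show "LL \<inter> {0 + (1/4)*0 .. 0 + (1/4)*(5/3)} \<subseteq> (\<lambda>t. 0 + (1/4)*t) ` GN"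
  proof
    fix x assume x: "x \<in> LL \<inter> {0 + (1/4)*0 .. 0 + (1/4)*(5/3)}"
    then have "x \<in> GN" "x \<le> 5/12" by (auto simp: LL_def)
    then obtain t where "t \<in> GN" "x = t/4" using GN_sub by (cases rule: GN_cases) force+
    then show "x \<in> (\<lambda>t. 0 + (1/4)*t) ` GN" by auto
  qed
  show "(\<lambda>t. 0 + (1/4)*t) ` GN \<subseteq> LL \<inter> {0 + (1/4)*0 .. 0 + (1/4)*(5/3)}"
    using GN_q GN_sub by (force simp: LL_def)
qed

lemma LL_2: "LL \<inter> {1/2 + (1/4)*0 .. 1/2 + (1/4)*(2/3)} = (\<lambda>t. 1/2 + (1/4)*t) ` LL"
proof
  show "LL \<inter> {1/2 + (1/4)*0 .. 1/2 + (1/4)*(2/3)} \<subseteq> (\<lambda>t. 1/2 + (1/4)*t) ` LL"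
  proof
    fix x assume x: "x \<in> LL \<inter> {1/2 + (1/4)*0 .. 1/2 + (1/4)*(2/3)}"
    then have xg: "x \<in> GN" "1/2 \<le> x" "x \<le> 2/3" by (auto simp: LL_def)
    then obtain t where "t \<in> GN" "x = 1/2 + t/4" using GN_sub by (cases rule: GN_cases) force+
    moreover then have "t \<le> 2/3" using xg by simp
    ultimately show "x \<in> (\<lambda>t. 1/2 + (1/4)*t) ` LL" using GN_sub by (force simp: LL_def)
  qed
  show "(\<lambda>t. 1/2 + (1/4)*t) ` LL \<subseteq> LL \<inter> {1/2 + (1/4)*0 .. 1/2 + (1/4)*(2/3)}"
    using LL_h by (force simp: LL_def)
qed

lemma LL_gap: "x \<in> LL \<Longrightarrow> \<not> (5/12 < x \<and> x < 1/2)"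
proof
  assume x: "x \<in> LL" "5/12 < x \<and> x < 1/2"
  then have "x \<in> GN" by (simp add: LL_def)
  then show False using x GN_sub by (cases rule: GN_cases) force+
qed

lemma RR_1: "RR \<inter> {3/4 + (1/4)*1 .. 3/4 + (1/4)*(5/3)} = (\<lambda>t. 3/4 + (1/4)*t) ` RR"
proof
  show "RR \<inter> {3/4 + (1/4)*1 .. 3/4 + (1/4)*(5/3)} \<subseteq> (\<lambda>t. 3/4 + (1/4)*t) ` RR"
  proof
    fix x assume x: "x \<in> RR \<inter> {3/4 + (1/4)*1 .. 3/4 + (1/4)*(5/3)}"
    then have xg: "x \<in> GN" "1 \<le> x" "x \<le> 7/6" by (auto simp: RR_def)
    then obtain t where "t \<in> GN" "x = 3/4 + t/4" using GN_sub by (cases rule: GN_cases) force+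
    moreover then have "1 \<le> t" using xg by simp
    ultimately show "x \<in> (\<lambda>t. 3/4 + (1/4)*t) ` RR" using GN_sub by (force simp: RR_def)
  qed
  show "(\<lambda>t. 3/4 + (1/4)*t) ` RR \<subseteq> RR \<inter> {3/4 + (1/4)*1 .. 3/4 + (1/4)*(5/3)}"
    using GN_t by (force simp: RR_def)
qed

lemma RR_2: "RR \<inter> {5/4 + (1/4)*0 .. 5/4 + (1/4)*(5/3)} = (\<lambda>t. 5/4 + (1/4)*t) ` GN"
proof
  show "RR \<inter> {5/4 + (1/4)*0 .. 5/4 + (1/4)*(5/3)} \<subseteq> (\<lambda>t. 5/4 + (1/4)*t) ` GN"
  proof
    fix x assume x: "x \<in> RR \<inter> {5/4 + (1/4)*0 .. 5/4 + (1/4)*(5/3)}"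
    then have "x \<in> GN" "5/4 \<le> x" by (auto simp: RR_def)
    then obtain t where "t \<in> GN" "x = 5/4 + t/4" using GN_sub by (cases rule: GN_cases) force+
    then show "x \<in> (\<lambda>t. 5/4 + (1/4)*t) ` GN" by auto
  qed
  show "(\<lambda>t. 5/4 + (1/4)*t) ` GN \<subseteq> RR \<inter> {5/4 + (1/4)*0 .. 5/4 + (1/4)*(5/3)}"
    using GN_f GN_sub by (force simp: RR_def)
qed

lemma RR_gap: "x \<in> RR \<Longrightarrow> \<not> (7/6 < x \<and> x < 5/4)"
proof
  assume x: "x \<in> RR" "7/6 < x \<and> x < 5/4"
  then have "x \<in> GN" by (simp add: RR_def)
  then show False using x GN_sub by (cases rule: GN_cases) force+
qed

lemma IRS_1: "IRS \<inter> {2/3 + (1/3)*0 .. 2/3 + (1/3)*1} = (\<lambda>t. 2/3 + (1/3)*t) ` {0..1}"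
proof -
  have "IRS \<inter> {2/3 + (1/3)*0 .. 2/3 + (1/3)*1} = {2/3..1}" using interval_part by (auto simp: IRS_def)
  moreover have "(\<lambda>t. 2/3 + (1/3)*t) ` {0..1} = {2/3..1::real}"
  proof
    show "(\<lambda>t. 2/3 + (1/3)*t) ` {0..1} \<subseteq> {2/3..1::real}" by auto
    show "{2/3..1::real} \<subseteq> (\<lambda>t. 2/3 + (1/3)*t) ` {0..1}"
    proof
      fix x :: real assume "x \<in> {2/3..1}"
      then have "3*x - 2 \<in> {0..1}" "x = 2/3 + (1/3)*(3*x - 2)" by (auto simp: field_simps)
      then show "x \<in> (\<lambda>t. 2/3 + (1/3)*t) ` {0..1}" by blast
    qed
  qed
  ultimately show ?thesis by simp
qed

lemma IRS_2: "IRS \<inter> {0 + 1*1 .. 0 + 1*(5/3)} = (\<lambda>t. 0 + 1*t) ` RR"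
  by (auto simp: IRS_def RR_def)

lemma GN_LL: "GN \<inter> {0 + 1*0 .. 0 + 1*(2/3)} = (\<lambda>t. 0 + 1*t) ` LL"
  by (auto simp: LL_def)

lemma GN_IRS: "GN \<inter> {0 + 1*(2/3) .. 0 + 1*(5/3)} = (\<lambda>t. 0 + 1*t) ` IRS"
  by (auto simp: IRS_def)

lemma Iv_1: "{0..1::real} \<inter> {0 + (1/2)*0 .. 0 + (1/2)*1} = (\<lambda>t. 0 + (1/2)*t) ` {0..1}"
proof
  show "{0..1::real} \<inter> {0 + (1/2)*0 .. 0 + (1/2)*1} \<subseteq> (\<lambda>t. 0 + (1/2)*t) ` {0..1}"
  proof
    fix x :: real assume "x \<in> {0..1} \<inter> {0 + (1/2)*0 .. 0 + (1/2)*1}"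
    then have "2*x \<in> {0..1}" "x = 0 + (1/2)*(2*x)" by auto
    then show "x \<in> (\<lambda>t. 0 + (1/2)*t) ` {0..1}" by blast
  qed
qed auto

lemma Iv_2: "{0..1::real} \<inter> {1/2 + (1/2)*0 .. 1/2 + (1/2)*1} = (\<lambda>t. 1/2 + (1/2)*t) ` {0..1}"
proof
  show "{0..1::real} \<inter> {1/2 + (1/2)*0 .. 1/2 + (1/2)*1} \<subseteq> (\<lambda>t. 1/2 + (1/2)*t) ` {0..1}"
  proof
    fix x :: real assume "x \<in> {0..1} \<inter> {1/2 + (1/2)*0 .. 1/2 + (1/2)*1}"
    then have "2*x - 1 \<in> {0..1}" "x = 1/2 + (1/2)*(2*x - 1)" by (auto simp: field_simps)
    then show "x \<in> (\<lambda>t. 1/2 + (1/2)*t) ` {0..1}" by blast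
  qed
qed auto

section \<open>States of the common tree shape\<close>

datatype st = SE | SL | SR | SIR | SIv

fun trans :: "st \<Rightarrow> bool \<Rightarrow> st" where
  "trans SE False = SL" | "trans SE True = SIR"
| "trans SIR False = SIv" | "trans SIR True = SR"
| "trans SIv _ = SIv"
| "trans SL False = SE" | "trans SL True = SL"
| "trans SR False = SR" | "trans SR True = SE"

fun stt :: "bool list \<Rightarrow> st" where
  "stt [] = SE" | "stt (\<beta> # l) = trans (stt l) \<beta>"

fun lo :: "st \<Rightarrow> real" where "lo SE = 0" | "lo SL = 0" | "lo SR = 1" | "lo SIR = 2/3" | "lo SIv = 0"
fun hi :: "st \<Rightarrow> real" where "hi SE = 5/3" | "hi SL = 2/3" | "hi SR = 5/3" | "hi SIR = 5/3" | "hi SIv = 1"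
fun cl :: "st \<Rightarrow> real" where "cl SE = 2/3" | "cl SL = 5/12" | "cl SR = 7/6" | "cl SIR = 1" | "cl SIv = 1/2"
fun cr :: "st \<Rightarrow> real" where "cr SE = 2/3" | "cr SL = 1/2" | "cr SR = 5/4" | "cr SIR = 1" | "cr SIv = 1/2"
fun TS :: "st \<Rightarrow> real set" where "TS SE = GN" | "TS SL = LL" | "TS SR = RR" | "TS SIR = IRS" | "TS SIv = {0..1}"

fun chm :: "st \<Rightarrow> bool \<Rightarrow> real \<times> real" where
  "chm SE _ = (0, 1)"
| "chm SIR False = (2/3, 1/3)" | "chm SIR True = (0, 1)"
| "chm SIv False = (0, 1/2)" | "chm SIv True = (1/2, 1/2)"
| "chm SL False = (0, 1/4)" | "chm SL True = (1/2, 1/4)"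
| "chm SR False = (3/4, 1/4)" | "chm SR True = (5/4, 1/4)"

lemma chm_pos: "snd (chm T \<beta>) > 0"
  by (cases T; cases \<beta>) auto

lemma loc_step: "TS T \<inter> {fst (chm T \<beta>) + snd (chm T \<beta>) * lo (trans T \<beta>) .. fst (chm T \<beta>) + snd (chm T \<beta>) * hi (trans T \<beta>)}
   = (\<lambda>t. fst (chm T \<beta>) + snd (chm T \<beta>) * t) ` TS (trans T \<beta>)"
  by (cases T; cases \<beta>) (simp_all only: chm.simps trans.simps lo.simps hi.simps TS.simps fst_conv snd_conv
        LL_1 LL_2 RR_1 RR_2 IRS_1 IRS_2 GN_LL GN_IRS Iv_1 Iv_2)

lemma ends_False: "fst (chm T False) + snd (chm T False) * lo (trans T False) = lo T"
   "fst (chm T False) + snd (chm T False) * hi (trans T False) = cl T"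
  by (cases T; simp)+

lemma ends_True: "fst (chm T True) + snd (chm T True) * lo (trans T True) = cr T"
   "fst (chm T True) + snd (chm T True) * hi (trans T True) = hi T"
  by (cases T; simp)+

lemma st_order: "lo T < cl T" "cl T \<le> cr T" "cr T < hi T"
  by (cases T; simp)+

lemma st_mem: "lo T \<in> TS T" "hi T \<in> TS T" "cl T \<in> TS T" "cr T \<in> TS T"
proof -
  have L: "0 \<in> LL" "2/3 \<in> LL" "5/12 \<in> LL" "1/2 \<in> LL"
    using GN_0 GN_23 GN_q[OF GN_53] GN_h[OF GN_0] by (auto simp: LL_def)
  have R: "1 \<in> RR" "5/3 \<in> RR" "7/6 \<in> RR" "5/4 \<in> RR"
    using GN_1 GN_53 GN_t[OF GN_53] GN_f[OF GN_0] by (auto simp: RR_def)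
  have I: "2/3 \<in> IRS" "5/3 \<in> IRS" "1 \<in> IRS"
    using GN_23 GN_53 GN_1 by (auto simp: IRS_def)
  show "lo T \<in> TS T" "hi T \<in> TS T" "cl T \<in> TS T" "cr T \<in> TS T"
    by (cases T; simp add: L R I GN_0 GN_53 GN_23)+
qed

lemma st_gap: "x \<in> TS T \<Longrightarrow> \<not> (cl T < x \<and> x < cr T)"
  by (cases T) (auto dest: LL_gap RR_gap)

lemma st_shrink: "snd (chm T \<beta>) * (hi (trans T \<beta>) - lo (trans T \<beta>)) \<le> (2/3) * (hi T - lo T)"
  by (cases T; cases \<beta>) auto

fun gn :: "bool list \<Rightarrow> real \<times> real" where
  "gn [] = (0, 1)"
| "gn (\<beta> # l) = (fst (gn l) + snd (gn l) * fst (chm (stt l) \<beta>), snd (gn l) * snd (chm (stt l) \<beta>))"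

definition "aG l = fst (gn l) + snd (gn l) * lo (stt l)"
definition "bG l = fst (gn l) + snd (gn l) * hi (stt l)"
definition "cG l = fst (gn l) + snd (gn l) * cl (stt l)"
definition "dG l = fst (gn l) + snd (gn l) * cr (stt l)"

lemma gn_pos: "snd (gn l) > 0"
  by (induct l) (auto intro!: mult_pos_pos chm_pos)

lemma gn_child:
  "aG (\<beta> # l) = fst (gn l) + snd (gn l) * (fst (chm (stt l) \<beta>) + snd (chm (stt l) \<beta>) * lo (trans (stt l) \<beta>))"
  "bG (\<beta> # l) = fst (gn l) + snd (gn l) * (fst (chm (stt l) \<beta>) + snd (chm (stt l) \<beta>) * hi (trans (stt l) \<beta>))"
  by (simp_all add: aG_def bG_def algebra_simps)

lemma gn_child_ends:
  "aG (False # l) = aG l" "bG (False # l) = cG l" "aG (True # l) = dG l" "bG (True # l) = bG l"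
  using gn_child[of False l] gn_child[of True l] ends_False[of "stt l"] ends_True[of "stt l"]
  by (simp_all add: aG_def bG_def cG_def dG_def)

lemma gn_order: "aG l < cG l" "cG l \<le> dG l" "dG l < bG l"
  using gn_pos[of l] st_order[of "stt l"] by (simp_all add: aG_def bG_def cG_def dG_def)

lemma gn_loc: "GN \<inter> {aG l .. bG l} = (\<lambda>t. fst (gn l) + snd (gn l) * t) ` TS (stt l)"
proof (induct l)
  case Nil then show ?case using GN_sub by (auto simp: aG_def bG_def)
next
  case (Cons \<beta> l)
  define p where "p = fst (gn l)"
  define s where "s = snd (gn l)"
  define T where "T = stt l"
  define \<mu> where "\<mu> = fst (chm T \<beta>)"
  define lm where "lm = snd (chm T \<beta>)"
  define T' where "T' = trans T \<beta>"
  have s: "s > 0" using gn_pos s_def by simp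
  have IH: "GN \<inter> {p + s * lo T .. p + s * hi T} = (\<lambda>t. p + s * t) ` TS T"
    using Cons by (simp add: aG_def bG_def p_def s_def T_def)
  have ch: "aG (\<beta> # l) = p + s * (\<mu> + lm * lo T')" "bG (\<beta> # l) = p + s * (\<mu> + lm * hi T')"
    using gn_child[of \<beta> l] by (simp_all add: p_def s_def T_def \<mu>_def lm_def T'_def)
  have sub: "lo T \<le> \<mu> + lm * lo T'" "\<mu> + lm * hi T' \<le> hi T"
    using ends_False[of T] ends_True[of T] st_order[of T] unfolding \<mu>_def lm_def T'_def
    by (cases \<beta>; simp)+
  have "GN \<inter> {aG (\<beta> # l) .. bG (\<beta> # l)} = (GN \<inter> {p + s * lo T .. p + s * hi T}) \<inter> {p + s * (\<mu> + lm * lo T') .. p + s * (\<mu> + lm * hi T')}"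
  proof -
    have "{p + s * (\<mu> + lm * lo T') .. p + s * (\<mu> + lm * hi T')} \<subseteq> {p + s * lo T .. p + s * hi T}"
      using sub s by (auto intro: order_trans mult_left_mono)
    then show ?thesis unfolding ch by blast
  qed
  also have "\<dots> = (\<lambda>t. p + s * t) ` (TS T \<inter> {\<mu> + lm * lo T' .. \<mu> + lm * hi T'})"
    unfolding IH by (rule aff_int[OF s])
  also have "\<dots> = (\<lambda>t. p + s * t) ` ((\<lambda>t. \<mu> + lm * t) ` TS T')"
    using loc_step[of T \<beta>] unfolding \<mu>_def lm_def T'_def by simp
  also have "\<dots> = (\<lambda>t. fst (gn (\<beta> # l)) + snd (gn (\<beta> # l)) * t) ` TS (stt (\<beta> # l))"
    unfolding image_image by (simp add: p_def s_def T_def \<mu>_def lm_def T'_def algebra_simps)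
  finally show ?case .
qed

lemma gn_mem: "t \<in> TS (stt l) \<Longrightarrow> fst (gn l) + snd (gn l) * t \<in> GN"
  using gn_loc[of l] by blast

lemma GN_tree_ok: "tree_ok GN aG bG cG dG"
  unfolding tree_ok_def
proof (intro allI conjI ballI)
  fix l
  show "aG l \<in> GN" "bG l \<in> GN"
    using gn_mem st_mem by (simp_all add: aG_def bG_def)
  show "aG l < cG l" "cG l \<le> dG l" "dG l < bG l" by (rule gn_order)+
  show "aG (False # l) = aG l" "bG (False # l) = cG l" "aG (True # l) = dG l" "bG (True # l) = bG l"
    by (rule gn_child_ends)+
  fix x assume x: "x \<in> GN"
  show "\<not> (cG l < x \<and> x < dG l)"
  proof
    assume cx: "cG l < x \<and> x < dG l"
    then have "x \<in> GN \<inter> {aG l .. bG l}" using x gn_order[of l] by auto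
    then obtain t where t: "t \<in> TS (stt l)" "x = fst (gn l) + snd (gn l) * t" using gn_loc by auto
    have s: "snd (gn l) > 0" by (rule gn_pos)
    have "cl (stt l) < t" "t < cr (stt l)" using cx t s by (auto simp: cG_def dG_def)
    then show False using st_gap[OF t(1)] by simp
  qed
qed

lemma GN_len: "is_path ns \<Longrightarrow> bG (ns n) - aG (ns n) \<le> (5/3) * (2/3)^n"
proof (induct n)
  case 0 then show ?case by (simp add: is_path_def aG_def bG_def)
next
  case (Suc n)
  obtain \<beta> where \<beta>: "ns (Suc n) = \<beta> # ns n" using Suc(2) by (rule path_step)
  define l where "l = ns n"
  have s: "snd (gn l) > 0" by (rule gn_pos)
  have "bG (\<beta> # l) - aG (\<beta> # l) = snd (gn l) * (snd (chm (stt l) \<beta>) * (hi (trans (stt l) \<beta>) - lo (trans (stt l) \<beta>)))"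
    using gn_child[of \<beta> l] by (simp add: algebra_simps)
  also have "\<dots> \<le> snd (gn l) * ((2/3) * (hi (stt l) - lo (stt l)))"
    using s st_shrink by (intro mult_left_mono) auto
  also have "\<dots> = (2/3) * (bG l - aG l)" by (simp add: aG_def bG_def field_simps)
  also have "\<dots> \<le> (2/3) * ((5/3) * (2/3)^n)" using Suc l_def by simp
  finally show ?case using \<beta> l_def by simp
qed

lemma GN_tree: "is_tree GN aG bG cG dG"
  unfolding is_tree_def
proof (intro conjI allI impI)
  show "GN \<subseteq> {aG []..bG []}" using GN_sub by (simp add: aG_def bG_def)
  show "tree_ok GN aG bG cG dG" by (rule GN_tree_ok)
  fix ns :: "nat \<Rightarrow> bool list" assume P: "is_path ns"
  show "(\<lambda>n. bG (ns n) - aG (ns n)) \<longlonglongrightarrow> 0"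
  proof (rule Lim_null_comparison)
    show "\<forall>\<^sub>F n in sequentially. norm (bG (ns n) - aG (ns n)) \<le> (5/3) * (2/3)^n"
    proof (intro always_eventually allI)
      fix n
      have pos: "0 \<le> bG (ns n) - aG (ns n)" using gn_order[of "ns n"] by linarith
      then have "norm (bG (ns n) - aG (ns n)) = bG (ns n) - aG (ns n)" by simp
      then show "norm (bG (ns n) - aG (ns n)) \<le> (5/3) * (2/3)^n" using GN_len[OF P, of n] by simp
    qed
    show "(\<lambda>n. (5/3) * (2/3::real)^n) \<longlonglongrightarrow> 0" by (intro tendsto_mult_right_zero LIMSEQ_power_zero) simp
  qed
qed

lemma GN_cut_iff: "cG l = dG l \<longleftrightarrow> stt l \<noteq> SL \<and> stt l \<noteq> SR"
  using gn_pos[of l] by (cases "stt l") (simp_all add: cG_def dG_def)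

locale mcv =
  fixes M :: "real set"
  assumes mcv: "m_cantorval M"
begin

lemma M_compact: "compact M" and M_ne: "M \<noteq> {}" and M_closed: "closed M"
  and M_reg: "closure (interior M) = M"
  using mcv compact_imp_closed unfolding m_cantorval_def by auto

lemma P1:
  assumes x: "x \<in> M" and e: "e > 0"
  shows "\<exists>y\<in>interior M. \<bar>y - x\<bar> < e"
proof -
  have "x \<in> closure (interior M)" using x M_reg by simp
  then show ?thesis using e unfolding closure_approachable dist_real_def by blast
qed

lemma comp_maxint:
  assumes c: "c \<in> M"
  shows "maximal_interval (connected_component_set M c) M"
  unfolding maximal_interval_def
proof (intro conjI allI impI)
  show "connected_component_set M c \<noteq> {}" using c connected_component_refl by blast
  show "is_interval (connected_component_set M c)" by (simp add: is_interval_connected_1)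
  show "connected_component_set M c \<subseteq> M" by (rule connected_component_subset)
  fix K assume K: "is_interval K \<and> connected_component_set M c \<subseteq> K \<and> K \<subseteq> M"
  have "c \<in> K" using K c by auto
  then have "K \<subseteq> connected_component_set M c"
    using K by (intro connected_component_maximal) (auto simp: is_interval_connected_1)
  then show "K = connected_component_set M c" using K by blast
qed

lemma comp_bdd: "bdd_below (connected_component_set M c)" "bdd_above (connected_component_set M c)"
proof -
  have "bounded M" using M_compact compact_imp_bounded by blast
  then have "bounded (connected_component_set M c)" using connected_component_subset bounded_subset by blast
  then show "bdd_below (connected_component_set M c)" "bdd_above (connected_component_set M c)"
    by (auto simp: bounded_imp_bdd_below bounded_imp_bdd_above)
qed

lemma P2L:
  assumes cd: "c < d" "{c..d} \<subseteq> M" and e: "e > 0"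
  shows "\<exists>z\<in>M. c - e < z \<and> z < c"
proof -
  define J where "J = connected_component_set M c"
  have c: "c \<in> M" using cd by auto
  have mx: "maximal_interval J M" unfolding J_def by (rule comp_maxint[OF c])
  have cJ: "c \<in> J" using c by (simp add: J_def)
  have cdJ: "{c..d} \<subseteq> J" unfolding J_def using cd by (intro connected_component_maximal) auto
  have iJ: "is_interval J" unfolding J_def by (simp add: is_interval_connected_1)
  have JM: "J \<subseteq> M" unfolding J_def by (rule connected_component_subset)
  have bb: "bdd_below J" unfolding J_def by (rule comp_bdd)
  have le: "Inf J \<le> c" using cJ bb by (intro cInf_lower)
  show ?thesis
  proof (cases "Inf J < c")
    case True
    then obtain j where j: "j \<in> J" "j < c" using cInf_lessD[of J c] cJ by blast
    define z where "z = max j (c - e/2)"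
    have "j \<le> z \<and> z \<le> c" using e j by (auto simp: z_def)
    then have "z \<in> J" using iJ j(1) cJ unfolding is_interval_1 by blast
    then show ?thesis using JM j e by (intro bexI[of _ z]) (auto simp: z_def)
  next
    case False
    then have eq: "Inf J = c" using le by simp
    have "Inf J islimpt (M - J)" using mx mcv unfolding m_cantorval_def by blast
    then obtain z where z: "z \<in> M - J" "z \<noteq> c" "dist z c < min e (d - c)"
      using eq cd e unfolding islimpt_approachable by (metis diff_gt_0_iff_gt min_less_iff_conj)
    have "\<not> c < z"
    proof
      assume "c < z"
      then have "z \<in> {c..d}" using z by (auto simp: dist_real_def)
      then show False using cdJ z by auto
    qed
    then show ?thesis using z by (intro bexI[of _ z]) (auto simp: dist_real_def)
  qed
qed

lemma P2R:
  assumes cd: "c < d" "{c..d} \<subseteq> M" and e: "e > 0"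
  shows "\<exists>z\<in>M. d < z \<and> z < d + e"
proof -
  define J where "J = connected_component_set M d"
  have d: "d \<in> M" using cd by auto
  have mx: "maximal_interval J M" unfolding J_def by (rule comp_maxint[OF d])
  have dJ: "d \<in> J" using d by (simp add: J_def)
  have cdJ: "{c..d} \<subseteq> J" unfolding J_def using cd by (intro connected_component_maximal) auto
  have iJ: "is_interval J" unfolding J_def by (simp add: is_interval_connected_1)
  have JM: "J \<subseteq> M" unfolding J_def by (rule connected_component_subset)
  have bb: "bdd_above J" unfolding J_def by (rule comp_bdd)
  have le: "d \<le> Sup J" using dJ bb by (intro cSup_upper)
  show ?thesis
  proof (cases "d < Sup J")
    case True
    then obtain j where j: "j \<in> J" "d < j" using less_cSupD[of J d] dJ by blast
    define z where "z = min j (d + e/2)"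
    have "d \<le> z \<and> z \<le> j" using e j by (auto simp: z_def)
    then have "z \<in> J" using iJ j(1) dJ unfolding is_interval_1 by blast
    then show ?thesis using JM j e by (intro bexI[of _ z]) (auto simp: z_def)
  next
    case False
    then have eq: "Sup J = d" using le by simp
    have "Sup J islimpt (M - J)" using mx mcv unfolding m_cantorval_def by blast
    then obtain z where z: "z \<in> M - J" "z \<noteq> d" "dist z d < min e (d - c)"
      using eq cd e unfolding islimpt_approachable by (metis diff_gt_0_iff_gt min_less_iff_conj)
    have "\<not> z < d"
    proof
      assume "z < d"
      then have "z \<in> {c..d}" using z by (auto simp: dist_real_def)
      then show False using cdJ z by auto
    qed
    then show ?thesis using z by (intro bexI[of _ z]) (auto simp: dist_real_def)
  qed
qed

definition "rg x \<longleftrightarrow> (\<forall>e>0. \<exists>y. x < y \<and> y < x + e \<and> y \<notin> M)"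
definition "lg x \<longleftrightarrow> (\<forall>e>0. \<exists>y. x - e < y \<and> y < x \<and> y \<notin> M)"
definition "rm x \<longleftrightarrow> (\<forall>e>0. \<exists>y\<in>M. x < y \<and> y < x + e)"
definition "lm x \<longleftrightarrow> (\<forall>e>0. \<exists>y\<in>M. x - e < y \<and> y < x)"
definition "Cv a b \<longleftrightarrow> a < b \<and> a \<in> M \<and> b \<in> M \<and> rg a \<and> lg b \<and> rm a \<and> lm b"

lemma M_bdd: "bdd_below M" "bdd_above M"
proof -
  have "bounded M" using M_compact compact_imp_bounded by blast
  then show "bdd_below M" "bdd_above M" by (auto simp: bounded_imp_bdd_below bounded_imp_bdd_above)
qed

lemma interior_ball: "y \<in> interior M \<Longrightarrow> \<exists>r>0. {y - r..y + r} \<subseteq> M"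
proof -
  assume "y \<in> interior M"
  then obtain r where r: "r > 0" "ball y r \<subseteq> M" unfolding mem_interior by blast
  have "{y - r/2..y + r/2} \<subseteq> ball y r" using r by (auto simp: dist_real_def)
  then show ?thesis using r by (intro exI[of _ "r/2"]) auto
qed

lemma gapright_lg:
  assumes x: "x \<in> M" and d: "\<delta> > 0" and g: "\<And>y. x < y \<Longrightarrow> y < x + \<delta> \<Longrightarrow> y \<notin> M"
  shows "lg x" "lm x"
proof -
  show "lg x" unfolding lg_def
  proof (intro allI impI, rule ccontr)
    fix e :: real assume e: "e > 0" and n: "\<not> (\<exists>y. x - e < y \<and> y < x \<and> y \<notin> M)"
    have "{x - e/2..x} \<subseteq> M"
    proof
      fix z assume z: "z \<in> {x - e/2..x}"
      show "z \<in> M"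
      proof (cases "z = x")
        case False then show ?thesis using n z e by auto
      qed (use x in simp)
    qed
    then obtain z where "z \<in> M" "x < z" "z < x + \<delta>" using P2R[of "x - e/2" x \<delta>] e d by auto
    then show False using g by blast
  qed
  show "lm x" unfolding lm_def
  proof (intro allI impI)
    fix e :: real assume e: "e > 0"
    obtain y where y: "y \<in> interior M" "\<bar>y - x\<bar> < min e \<delta>" using P1[OF x, of "min e \<delta>"] e d by auto
    have yM: "y \<in> M" using y interior_subset by blast
    have "y \<noteq> x"
    proof
      assume "y = x"
      then obtain r where r: "r > 0" "{x - r..x + r} \<subseteq> M" using interior_ball y by blast
      have "x + min r \<delta> / 2 \<in> M" using r d by (intro subsetD[OF r(2)]) auto
      then show False using g[of "x + min r \<delta> / 2"] r d by auto
    qed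
    moreover have "\<not> x < y" using g[of y] y yM by auto
    ultimately have "y < x" by simp
    then show "\<exists>y\<in>M. x - e < y \<and> y < x" using y yM by (intro bexI[of _ y]) auto
  qed
qed

lemma gapleft_rg:
  assumes x: "x \<in> M" and d: "\<delta> > 0" and g: "\<And>y. x - \<delta> < y \<Longrightarrow> y < x \<Longrightarrow> y \<notin> M"
  shows "rg x" "rm x"
proof -
  show "rg x" unfolding rg_def
  proof (intro allI impI, rule ccontr)
    fix e :: real assume e: "e > 0" and n: "\<not> (\<exists>y. x < y \<and> y < x + e \<and> y \<notin> M)"
    have "{x..x + e/2} \<subseteq> M"
    proof
      fix z assume z: "z \<in> {x..x + e/2}"
      show "z \<in> M"
      proof (cases "z = x")
        case False then show ?thesis using n z e by auto
      qed (use x in simp)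
    qed
    then obtain z where "z \<in> M" "x - \<delta> < z" "z < x" using P2L[of x "x + e/2" \<delta>] e d by auto
    then show False using g by blast
  qed
  show "rm x" unfolding rm_def
  proof (intro allI impI)
    fix e :: real assume e: "e > 0"
    obtain y where y: "y \<in> interior M" "\<bar>y - x\<bar> < min e \<delta>" using P1[OF x, of "min e \<delta>"] e d by auto
    have yM: "y \<in> M" using y interior_subset by blast
    have "y \<noteq> x"
    proof
      assume "y = x"
      then obtain r where r: "r > 0" "{x - r..x + r} \<subseteq> M" using interior_ball y by blast
      have "x - min r \<delta> / 2 \<in> M" using r d by (intro subsetD[OF r(2)]) auto
      then show False using g[of "x - min r \<delta> / 2"] r d by auto
    qed
    moreover have "\<not> y < x" using g[of y] y yM by auto
    ultimately have "x < y" by simp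
    then show "\<exists>y\<in>M. x < y \<and> y < x + e" using y yM by (intro bexI[of _ y]) auto
  qed
qed

definition clo :: "real \<Rightarrow> real" where "clo y = Inf {t. t \<le> y \<and> {t..y} \<subseteq> M}"
definition chi :: "real \<Rightarrow> real" where "chi y = Sup {t. y \<le> t \<and> {y..t} \<subseteq> M}"

lemma clo_props:
  assumes y: "y \<in> interior M"
  shows "clo y < y" "{clo y..y} \<subseteq> M" "clo y \<in> M" "lg (clo y)" "lm (clo y)"
    "\<And>x. x \<in> M \<Longrightarrow> rg x \<Longrightarrow> x < y \<Longrightarrow> x < clo y"
proof -
  define S where "S = {t. t \<le> y \<and> {t..y} \<subseteq> M}"
  have yM: "y \<in> M" using y interior_subset by blast
  have yS: "y \<in> S" using yM by (simp add: S_def)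
  have SM: "S \<subseteq> M" by (auto simp: S_def)
  have bb: "bdd_below S" by (rule bdd_below_mono[OF M_bdd(1) SM])
  obtain r where r: "r > 0" "{y - r..y + r} \<subseteq> M" using interior_ball y by blast
  have "y - r \<in> S" using r by (auto simp: S_def)
  then have "clo y \<le> y - r" unfolding clo_def S_def[symmetric] using bb by (intro cInf_lower)
  then show lt: "clo y < y" using r by simp
  have open_part: "z \<in> M" if z: "clo y < z" "z \<le> y" for z
  proof -
    obtain t where t: "t \<in> S" "t < z" using cInf_lessD[of S z] yS z unfolding clo_def S_def[symmetric] by blast
    then show ?thesis using z by (auto simp: S_def)
  qed
  have cM: "clo y \<in> M"
  proof -
    have "\<forall>e>0. \<exists>w\<in>M. dist w (clo y) < e"
    proof (intro allI impI)
      fix e :: real assume e: "e > 0"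
      define w where "w = clo y + min (e/2) (y - clo y)"
      have "w \<in> M" using lt e by (intro open_part) (auto simp: w_def)
      moreover have "dist w (clo y) < e" using e lt by (auto simp: w_def dist_real_def)
      ultimately show "\<exists>w\<in>M. dist w (clo y) < e" by blast
    qed
    then show ?thesis using closed_approachable[OF M_closed] by blast
  qed
  show "clo y \<in> M" by (rule cM)
  show sub: "{clo y..y} \<subseteq> M"
  proof
    fix z assume "z \<in> {clo y..y}"
    then show "z \<in> M" using cM open_part by (cases "z = clo y") auto
  qed
  show "lg (clo y)" unfolding lg_def
  proof (intro allI impI, rule ccontr)
    fix e :: real assume e: "e > 0" and n: "\<not> (\<exists>w. clo y - e < w \<and> w < clo y \<and> w \<notin> M)"
    have "{clo y - e/2..y} \<subseteq> M"
    proof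
      fix z assume z: "z \<in> {clo y - e/2..y}"
      show "z \<in> M" using n sub z e by (cases "z < clo y") auto
    qed
    then have "clo y - e/2 \<in> S" using lt e by (auto simp: S_def)
    then have "clo y \<le> clo y - e/2" unfolding clo_def S_def[symmetric] using bb by (intro cInf_lower)
    then show False using e by simp
  qed
  show "lm (clo y)" unfolding lm_def using P2L[OF lt sub] by blast
  show "x < clo y" if x: "x \<in> M" "rg x" "x < y" for x
  proof (rule ccontr)
    assume "\<not> x < clo y"
    then have sx: "{x..y} \<subseteq> M" using sub by auto
    obtain w where w: "x < w" "w < x + (y - x)" "w \<notin> M" using x unfolding rg_def by (meson diff_gt_0_iff_gt)
    then have "w \<in> {x..y}" by auto
    then show False using sx w(3) by blast
  qed
qed

lemma chi_props:
  assumes y: "y \<in> interior M"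
  shows "y < chi y" "{y..chi y} \<subseteq> M" "chi y \<in> M" "rg (chi y)" "rm (chi y)"
    "\<And>x. x \<in> M \<Longrightarrow> lg x \<Longrightarrow> y < x \<Longrightarrow> chi y < x"
proof -
  define S where "S = {t. y \<le> t \<and> {y..t} \<subseteq> M}"
  have yM: "y \<in> M" using y interior_subset by blast
  have yS: "y \<in> S" using yM by (simp add: S_def)
  have SM: "S \<subseteq> M" by (auto simp: S_def)
  have bb: "bdd_above S" by (rule bdd_above_mono[OF M_bdd(2) SM])
  obtain r where r: "r > 0" "{y - r..y + r} \<subseteq> M" using interior_ball y by blast
  have "y + r \<in> S" using r by (auto simp: S_def)
  then have "y + r \<le> chi y" unfolding chi_def S_def[symmetric] using bb by (intro cSup_upper)
  then show lt: "y < chi y" using r by simp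
  have open_part: "z \<in> M" if z: "y \<le> z" "z < chi y" for z
  proof -
    obtain t where t: "t \<in> S" "z < t" using less_cSupD[of S z] yS z unfolding chi_def S_def[symmetric] by blast
    then show ?thesis using z by (auto simp: S_def)
  qed
  have cM: "chi y \<in> M"
  proof -
    have "\<forall>e>0. \<exists>w\<in>M. dist w (chi y) < e"
    proof (intro allI impI)
      fix e :: real assume e: "e > 0"
      define w where "w = chi y - min (e/2) (chi y - y)"
      have "w \<in> M" using lt e by (intro open_part) (auto simp: w_def)
      moreover have "dist w (chi y) < e" using e lt by (auto simp: w_def dist_real_def)
      ultimately show "\<exists>w\<in>M. dist w (chi y) < e" by blast
    qed
    then show ?thesis using closed_approachable[OF M_closed] by blast
  qed
  show "chi y \<in> M" by (rule cM)
  show sub: "{y..chi y} \<subseteq> M"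
  proof
    fix z assume "z \<in> {y..chi y}"
    then show "z \<in> M" using cM open_part by (cases "z = chi y") auto
  qed
  show "rg (chi y)" unfolding rg_def
  proof (intro allI impI, rule ccontr)
    fix e :: real assume e: "e > 0" and n: "\<not> (\<exists>w. chi y < w \<and> w < chi y + e \<and> w \<notin> M)"
    have "{y..chi y + e/2} \<subseteq> M"
    proof
      fix z assume z: "z \<in> {y..chi y + e/2}"
      show "z \<in> M" using n sub z e by (cases "chi y < z") auto
    qed
    then have "chi y + e/2 \<in> S" using lt e by (auto simp: S_def)
    then have "chi y + e/2 \<le> chi y" unfolding chi_def S_def[symmetric] using bb by (intro cSup_upper)
    then show False using e by simp
  qed
  show "rm (chi y)" unfolding rm_def using P2R[OF lt sub] by blast
  show "chi y < x" if x: "x \<in> M" "lg x" "y < x" for x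
  proof (rule ccontr)
    assume "\<not> chi y < x"
    then have sx: "{y..x} \<subseteq> M" using sub by auto
    obtain w where w: "x - (x - y) < w" "w < x" "w \<notin> M" using x unfolding lg_def by (meson diff_gt_0_iff_gt)
    then have "w \<in> {y..x}" by auto
    then show False using sx w(3) by blast
  qed
qed

lemma chi_eq:
  assumes cy: "c \<le> y" "{c..y} \<subseteq> M"
  shows "chi c = chi y"
proof -
  define A where "A = {t. c \<le> t \<and> {c..t} \<subseteq> M}"
  define B where "B = {t. y \<le> t \<and> {y..t} \<subseteq> M}"
  have yB: "y \<in> B" using cy by (auto simp: B_def)
  have BA: "B \<subseteq> A"
  proof
    fix t assume "t \<in> B"
    then have "y \<le> t" "{y..t} \<subseteq> M" by (auto simp: B_def)
    then show "t \<in> A" using cy unfolding A_def by (auto, metis atLeastAtMost_iff linear subsetD)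
  qed
  have AM: "A \<subseteq> M" by (auto simp: A_def)
  have bA: "bdd_above A" by (rule bdd_above_mono[OF M_bdd(2) AM])
  have bB: "bdd_above B" by (rule bdd_above_mono[OF bA BA])
  have "Sup A \<le> Sup B"
  proof (rule cSup_least)
    show "A \<noteq> {}" using yB BA by blast
    fix t assume t: "t \<in> A"
    show "t \<le> Sup B"
    proof (cases "y \<le> t")
      case True
      have "{y..t} \<subseteq> {c..t}" using cy(1) by auto
      then have "t \<in> B" using t True unfolding A_def B_def by blast
      then show ?thesis using bB by (intro cSup_upper)
    next
      case False
      then have "t \<le> y" by simp
      also have "y \<le> Sup B" using yB bB by (intro cSup_upper)
      finally show ?thesis .
    qed
  qed
  moreover have "Sup B \<le> Sup A" using BA yB bA by (intro cSup_subset_mono) auto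
  ultimately show ?thesis unfolding chi_def A_def[symmetric] B_def[symmetric] by simp
qed

end

context mcv begin

definition "kE a b = (LEAST k. a < rq k \<and> rq k < b \<and> rq k \<in> interior M)"
definition "kL a b = (LEAST k. (a+b)/2 < rq k \<and> rq k < b \<and> rq k \<notin> M)"
definition "kR a b = (LEAST k. a < rq k \<and> rq k < (a+b)/2 \<and> rq k \<notin> M)"

definition cutM :: "st \<Rightarrow> real \<Rightarrow> real \<Rightarrow> real \<times> real" where
  "cutM T a b = (case T of
      SE \<Rightarrow> (clo (rq (kE a b)), clo (rq (kE a b)))
    | SIR \<Rightarrow> (chi a, chi a)
    | SIv \<Rightarrow> ((a+b)/2, (a+b)/2)
    | SL \<Rightarrow> (gapl M (rq (kL a b)), gapr M (rq (kL a b)))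
    | SR \<Rightarrow> (gapl M (rq (kR a b)), gapr M (rq (kR a b))))"

primrec pm :: "bool list \<Rightarrow> real \<times> real" where
  "pm [] = (Inf M, Sup M)"
| "pm (\<beta> # l) = (if \<beta> then (snd (cutM (stt l) (fst (pm l)) (snd (pm l))), snd (pm l))
      else (fst (pm l), fst (cutM (stt l) (fst (pm l)) (snd (pm l)))))"

definition "aM l = fst (pm l)"
definition "bM l = snd (pm l)"
definition "cM l = fst (cutM (stt l) (aM l) (bM l))"
definition "dM l = snd (cutM (stt l) (aM l) (bM l))"

definition InvM :: "st \<Rightarrow> real \<Rightarrow> real \<Rightarrow> bool" where
  "InvM T a b = (case T of
      SE \<Rightarrow> Cv a b | SL \<Rightarrow> Cv a b | SR \<Rightarrow> Cv a b
    | SIR \<Rightarrow> a \<in> M \<and> b \<in> M \<and> a < chi a \<and> chi a < b \<and> {a..chi a} \<subseteq> M \<and> Cv (chi a) b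
    | SIv \<Rightarrow> a < b \<and> {a..b} \<subseteq> M)"

definition good_step :: "st \<Rightarrow> real \<Rightarrow> real \<Rightarrow> bool" where
  "good_step T a b \<longleftrightarrow> a \<in> M \<and> b \<in> M \<and> a < fst (cutM T a b) \<and> fst (cutM T a b) \<le> snd (cutM T a b)
     \<and> snd (cutM T a b) < b \<and> fst (cutM T a b) \<in> M \<and> snd (cutM T a b) \<in> M
     \<and> (\<forall>x\<in>M. \<not> (fst (cutM T a b) < x \<and> x < snd (cutM T a b)))
     \<and> InvM (trans T False) a (fst (cutM T a b)) \<and> InvM (trans T True) (snd (cutM T a b)) b"

lemma kE_props:
  assumes C: "Cv a b"
  shows "a < rq (kE a b)" "rq (kE a b) < b" "rq (kE a b) \<in> interior M"
    "\<And>j. a < rq j \<Longrightarrow> rq j < b \<Longrightarrow> rq j \<in> interior M \<Longrightarrow> kE a b \<le> j"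
proof -
  obtain z where z: "z \<in> M" "a < z" "z < a + (b - a)" using C unfolding Cv_def rm_def by (meson diff_gt_0_iff_gt)
  obtain y where y: "y \<in> interior M" "\<bar>y - z\<bar> < min (z - a) (b - z)" using P1[OF z(1), of "min (z - a) (b - z)"] z by auto
  have op: "open ({a<..<b} \<inter> interior M)" by auto
  have "y \<in> {a<..<b} \<inter> interior M" using y z by auto
  then obtain j where "rq j \<in> {a<..<b} \<inter> interior M" using rq_open[OF op] by blast
  then have ex: "a < rq j \<and> rq j < b \<and> rq j \<in> interior M" by auto
  have "a < rq (kE a b) \<and> rq (kE a b) < b \<and> rq (kE a b) \<in> interior M"
    unfolding kE_def by (rule LeastI[of "\<lambda>k. a < rq k \<and> rq k < b \<and> rq k \<in> interior M", OF ex])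
  then show "a < rq (kE a b)" "rq (kE a b) < b" "rq (kE a b) \<in> interior M" by auto
  show "\<And>j. a < rq j \<Longrightarrow> rq j < b \<Longrightarrow> rq j \<in> interior M \<Longrightarrow> kE a b \<le> j"
    unfolding kE_def by (rule Least_le) auto
qed

lemma kL_props:
  assumes C: "Cv a b"
  shows "(a+b)/2 < rq (kL a b)" "rq (kL a b) < b" "rq (kL a b) \<notin> M"
    "\<And>j. (a+b)/2 < rq j \<Longrightarrow> rq j < b \<Longrightarrow> rq j \<notin> M \<Longrightarrow> kL a b \<le> j"
proof -
  have ab: "a < b" using C by (simp add: Cv_def)
  obtain z where z: "b - (b - a)/2 < z" "z < b" "z \<notin> M" using C ab unfolding Cv_def lg_def by (meson half_gt_zero diff_gt_0_iff_gt)
  have op: "open ({(a+b)/2<..<b} - M)" using M_closed by (intro open_Diff) auto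
  have "z \<in> {(a+b)/2<..<b} - M" using z by (auto simp: field_simps)
  then obtain j where "rq j \<in> {(a+b)/2<..<b} - M" using rq_open[OF op] by blast
  then have ex: "(a+b)/2 < rq j \<and> rq j < b \<and> rq j \<notin> M" by auto
  have "(a+b)/2 < rq (kL a b) \<and> rq (kL a b) < b \<and> rq (kL a b) \<notin> M"
    unfolding kL_def by (rule LeastI[of "\<lambda>k. (a+b)/2 < rq k \<and> rq k < b \<and> rq k \<notin> M", OF ex])
  then show "(a+b)/2 < rq (kL a b)" "rq (kL a b) < b" "rq (kL a b) \<notin> M" by auto
  show "\<And>j. (a+b)/2 < rq j \<Longrightarrow> rq j < b \<Longrightarrow> rq j \<notin> M \<Longrightarrow> kL a b \<le> j"
    unfolding kL_def by (rule Least_le) auto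
qed

lemma kR_props:
  assumes C: "Cv a b"
  shows "a < rq (kR a b)" "rq (kR a b) < (a+b)/2" "rq (kR a b) \<notin> M"
    "\<And>j. a < rq j \<Longrightarrow> rq j < (a+b)/2 \<Longrightarrow> rq j \<notin> M \<Longrightarrow> kR a b \<le> j"
proof -
  have ab: "a < b" using C by (simp add: Cv_def)
  obtain z where z: "a < z" "z < a + (b - a)/2" "z \<notin> M" using C ab unfolding Cv_def rg_def by (meson half_gt_zero diff_gt_0_iff_gt)
  have op: "open ({a<..<(a+b)/2} - M)" using M_closed by (intro open_Diff) auto
  have "z \<in> {a<..<(a+b)/2} - M" using z by (auto simp: field_simps)
  then obtain j where "rq j \<in> {a<..<(a+b)/2} - M" using rq_open[OF op] by blast
  then have ex: "a < rq j \<and> rq j < (a+b)/2 \<and> rq j \<notin> M" by auto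
  have "a < rq (kR a b) \<and> rq (kR a b) < (a+b)/2 \<and> rq (kR a b) \<notin> M"
    unfolding kR_def by (rule LeastI[of "\<lambda>k. a < rq k \<and> rq k < (a+b)/2 \<and> rq k \<notin> M", OF ex])
  then show "a < rq (kR a b)" "rq (kR a b) < (a+b)/2" "rq (kR a b) \<notin> M" by auto
  show "\<And>j. a < rq j \<Longrightarrow> rq j < (a+b)/2 \<Longrightarrow> rq j \<notin> M \<Longrightarrow> kR a b \<le> j"
    unfolding kR_def by (rule Least_le) auto
qed

lemma gap_split:
  assumes C: "Cv a b" and r: "a < r" "r < b" "r \<notin> M"
  shows "Cv a (gapl M r)" "Cv (gapr M r) b" "gapl M r < r" "r < gapr M r"
    "gapl M r \<in> M" "gapr M r \<in> M" "\<And>x. x \<in> M \<Longrightarrow> \<not> (gapl M r < x \<and> x < gapr M r)"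
proof -
  have ab: "a \<in> M" "b \<in> M" using C by (auto simp: Cv_def)
  note G = gap_props[OF M_closed ab(1) r(1) ab(2) r(2) r(3)]
  show "gapl M r < r" "r < gapr M r" "gapl M r \<in> M" "gapr M r \<in> M"
    "\<And>x. x \<in> M \<Longrightarrow> \<not> (gapl M r < x \<and> x < gapr M r)" using G by auto
  obtain z where z: "z \<in> M" "a < z" "z < a + (r - a)" using C r unfolding Cv_def rm_def by (meson diff_gt_0_iff_gt)
  have ag: "a < gapl M r" using G(7)[OF z(1)] z by simp
  obtain z' where z': "z' \<in> M" "b - (b - r) < z'" "z' < b" using C r unfolding Cv_def lm_def by (meson diff_gt_0_iff_gt)
  have gb: "gapr M r < b" using G(8)[OF z'(1)] z' by simp
  have d: "gapr M r - gapl M r > 0" using G(3,4) by simp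
  have nog: "\<And>y. gapl M r < y \<Longrightarrow> y < gapl M r + (gapr M r - gapl M r) \<Longrightarrow> y \<notin> M"
    using G(9) by auto
  have nog2: "\<And>y. gapr M r - (gapr M r - gapl M r) < y \<Longrightarrow> y < gapr M r \<Longrightarrow> y \<notin> M"
    using G(9) by auto
  note L = gapright_lg[OF G(1) d nog]
  note R = gapleft_rg[OF G(6) d nog2]
  show "Cv a (gapl M r)" using C ag G(1) L unfolding Cv_def by auto
  show "Cv (gapr M r) b" using C gb G(6) R unfolding Cv_def by auto
qed

lemma step_SE: "Cv a b \<Longrightarrow> good_step SE a b"
proof -
  assume C: "Cv a b"
  define r where "r = rq (kE a b)"
  have r: "a < r" "r < b" "r \<in> interior M" using kE_props[OF C] by (simp_all add: r_def)
  have ab: "a \<in> M" "b \<in> M" "rg a" "lg b" "rm a" "lm b" "a < b" using C by (auto simp: Cv_def)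
  note CL = clo_props[OF r(3)]
  note CH = chi_props[OF r(3)]
  have ac: "a < clo r" using CL(6)[OF ab(1) ab(3) r(1)] .
  have chb: "chi r < b" using CH(6)[OF ab(2) ab(4) r(2)] .
  have ceq: "chi (clo r) = chi r" using chi_eq[of "clo r" r] CL(1,2) by simp
  have cut: "cutM SE a b = (clo r, clo r)" by (simp add: cutM_def r_def)
  have sub: "{clo r..chi r} \<subseteq> M"
  proof
    fix x assume x: "x \<in> {clo r..chi r}"
    show "x \<in> M"
    proof (cases "x \<le> r")
      case True then show ?thesis using x CL(2) by auto
    next
      case False then show ?thesis using x CH(2) by auto
    qed
  qed
  show "good_step SE a b"
    unfolding good_step_def cut fst_conv snd_conv trans.simps InvM_def st.case
    using ab CL CH ac chb ceq sub r by (auto simp: Cv_def)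
qed

lemma step_SIR: "InvM SIR a b \<Longrightarrow> good_step SIR a b"
  unfolding good_step_def InvM_def cutM_def by (auto simp: Cv_def)

lemma step_SIv: "InvM SIv a b \<Longrightarrow> good_step SIv a b"
  unfolding good_step_def InvM_def cutM_def by auto

lemma step_SL: "Cv a b \<Longrightarrow> good_step SL a b"
proof -
  assume C: "Cv a b"
  define r where "r = rq (kL a b)"
  have ab: "a \<in> M" "b \<in> M" "a < b" using C by (auto simp: Cv_def)
  have r: "a < r" "r < b" "r \<notin> M" using kL_props[OF C] ab(3) by (simp_all add: r_def)
  note S = gap_split[OF C r]
  have cut: "cutM SL a b = (gapl M r, gapr M r)" by (simp add: cutM_def r_def)
  show "good_step SL a b"
    unfolding good_step_def cut fst_conv snd_conv trans.simps InvM_def st.case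
    using S ab by (auto simp: Cv_def)
qed

lemma step_SR: "Cv a b \<Longrightarrow> good_step SR a b"
proof -
  assume C: "Cv a b"
  define r where "r = rq (kR a b)"
  have ab: "a \<in> M" "b \<in> M" "a < b" using C by (auto simp: Cv_def)
  have r: "a < r" "r < b" "r \<notin> M" using kR_props[OF C] ab(3) by (simp_all add: r_def)
  note S = gap_split[OF C r]
  have cut: "cutM SR a b = (gapl M r, gapr M r)" by (simp add: cutM_def r_def)
  show "good_step SR a b"
    unfolding good_step_def cut fst_conv snd_conv trans.simps InvM_def st.case
    using S ab by (auto simp: Cv_def)
qed

lemma step_all: "InvM T a b \<Longrightarrow> good_step T a b"
  by (cases T) (auto simp: InvM_def intro: step_SE step_SL step_SR step_SIR[unfolded InvM_def] step_SIv[unfolded InvM_def])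

lemma root_inv: "InvM SE (Inf M) (Sup M)"
proof -
  note IS = compact_inf_sup[OF M_compact M_ne]
  have g1: "\<And>y. Inf M - 1 < y \<Longrightarrow> y < Inf M \<Longrightarrow> y \<notin> M" using IS(3) by force
  have g2: "\<And>y. Sup M < y \<Longrightarrow> y < Sup M + 1 \<Longrightarrow> y \<notin> M" using IS(4) by force
  note R = gapleft_rg[OF IS(1) zero_less_one g1]
  note L = gapright_lg[OF IS(2) zero_less_one g2]
  obtain z where z: "z \<in> M" "Inf M < z" using R(2) unfolding rm_def by (meson zero_less_one)
  have "Inf M < Sup M" using z IS(4)[OF z(1)] by simp
  then show ?thesis unfolding InvM_def st.case Cv_def using IS R L by auto
qed

lemma pm_inv: "InvM (stt l) (aM l) (bM l)"
proof (induct l)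
  case Nil then show ?case using root_inv by (simp add: aM_def bM_def)
next
  case (Cons \<beta> l)
  have G: "good_step (stt l) (aM l) (bM l)" by (rule step_all[OF Cons])
  show ?case using G unfolding good_step_def by (cases \<beta>) (simp_all add: aM_def bM_def)
qed

lemma M_tree_ok: "tree_ok M aM bM cM dM"
  unfolding tree_ok_def
proof (intro allI)
  fix l
  have G: "good_step (stt l) (aM l) (bM l)" by (rule step_all[OF pm_inv])
  then show "aM l \<in> M \<and> bM l \<in> M \<and> aM l < cM l \<and> cM l \<le> dM l \<and> dM l < bM l \<and>
        (\<forall>x\<in>M. \<not> (cM l < x \<and> x < dM l)) \<and>
        aM (False # l) = aM l \<and> bM (False # l) = cM l \<and> aM (True # l) = dM l \<and> bM (True # l) = bM l"
    unfolding good_step_def by (simp add: aM_def bM_def cM_def dM_def)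
qed

end

lemma halving_contra:
  fixes f :: "nat \<Rightarrow> real"
  assumes h: "\<And>n. n \<ge> N \<Longrightarrow> f (Suc n) \<le> f n / 2" and lb: "\<And>n. f n \<ge> c" and c: "c > 0"
  shows False
proof -
  have k: "f (N + k) \<le> f N * (1/2)^k" for k
  proof (induct k)
    case (Suc k)
    have "f (N + Suc k) \<le> f (N + k) / 2" using h[of "N + k"] by simp
    also have "\<dots> \<le> f N * (1/2)^k / 2" using Suc by simp
    finally show ?case by simp
  qed simp
  have fN: "f N > 0" using lb[of N] c by simp
  obtain k where "(1/2::real)^k < c / f N" using real_arch_pow_inv[of "c / f N" "1/2"] c fN by auto
  then have "f N * (1/2)^k < c" using fN by (simp add: field_simps)
  then show False using k[of k] lb[of "N + k"] by simp
qed

context mcv begin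

lemma T_step: "is_path ns \<Longrightarrow> \<exists>\<beta>. ns (Suc n) = \<beta> # ns n \<and> stt (ns (Suc n)) = trans (stt (ns n)) \<beta>"
  by (metis path_step stt.simps(2))

lemma SIv_stay:
  assumes P: "is_path ns" and T: "stt (ns n) = SIv"
  shows "stt (ns (n + k)) = SIv"
proof (induct k)
  case (Suc k)
  obtain \<beta> where "stt (ns (Suc (n + k))) = trans (stt (ns (n + k))) \<beta>" using T_step[OF P] by blast
  then show ?case using Suc by simp
qed (use T in simp)

lemma mid_cut: "stt l = SIv \<Longrightarrow> cM l = (aM l + bM l)/2 \<and> dM l = (aM l + bM l)/2"
  by (simp add: cM_def dM_def cutM_def)

lemma dichotomy:
  assumes P: "is_path ns"
  shows "(\<forall>N. \<exists>n\<ge>N. stt (ns n) = SE) \<or> (\<exists>N. \<forall>n\<ge>N. stt (ns n) = SIv)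
     \<or> (\<exists>N. \<forall>n\<ge>N. stt (ns n) = SL \<and> ns (Suc n) = True # ns n)
     \<or> (\<exists>N. \<forall>n\<ge>N. stt (ns n) = SR \<and> ns (Suc n) = False # ns n)"
proof (rule ccontr)
  assume neg: "\<not> ?thesis"
  then obtain N0 where N0: "\<And>n. n \<ge> N0 \<Longrightarrow> stt (ns n) \<noteq> SE" by (meson not_le)
  have n2: "\<not> (\<exists>N. \<forall>n\<ge>N. stt (ns n) = SIv)" using neg by blast
  have n3: "\<not> (\<exists>N. \<forall>n\<ge>N. stt (ns n) = SL \<and> ns (Suc n) = True # ns n)" using neg by blast
  have n4: "\<not> (\<exists>N. \<forall>n\<ge>N. stt (ns n) = SR \<and> ns (Suc n) = False # ns n)" using neg by blast
  have stayL: "\<forall>n\<ge>N. stt (ns n) = SL \<and> ns (Suc n) = True # ns n" if N: "N \<ge> N0" "stt (ns N) = SL" for N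
  proof -
    have A: "stt (ns (N + k)) = SL" for k
    proof (induct k)
      case (Suc k)
      obtain \<beta> where \<beta>: "ns (Suc (N + k)) = \<beta> # ns (N + k)" "stt (ns (Suc (N + k))) = trans (stt (ns (N + k))) \<beta>"
        using T_step[OF P] by blast
      have "stt (ns (Suc (N + k))) \<noteq> SE" using N0[of "Suc (N + k)"] N by simp
      then show ?case using \<beta> Suc by (cases \<beta>) auto
    qed (use N in simp)
    show ?thesis
    proof (intro allI impI)
      fix n assume n: "n \<ge> N"
      obtain \<beta> where \<beta>: "ns (Suc n) = \<beta> # ns n" "stt (ns (Suc n)) = trans (stt (ns n)) \<beta>"
        using T_step[OF P] by blast
      have sn: "stt (ns n) = SL" using A[of "n - N"] n by simp
      have "stt (ns (Suc n)) \<noteq> SE" using N0[of "Suc n"] N n by simp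
      then have "\<beta> = True" using \<beta> sn by (cases \<beta>) auto
      then show "stt (ns n) = SL \<and> ns (Suc n) = True # ns n" using sn \<beta> by simp
    qed
  qed
  have stayR: "\<forall>n\<ge>N. stt (ns n) = SR \<and> ns (Suc n) = False # ns n" if N: "N \<ge> N0" "stt (ns N) = SR" for N
  proof -
    have A: "stt (ns (N + k)) = SR" for k
    proof (induct k)
      case (Suc k)
      obtain \<beta> where \<beta>: "ns (Suc (N + k)) = \<beta> # ns (N + k)" "stt (ns (Suc (N + k))) = trans (stt (ns (N + k))) \<beta>"
        using T_step[OF P] by blast
      have "stt (ns (Suc (N + k))) \<noteq> SE" using N0[of "Suc (N + k)"] N by simp
      then show ?case using \<beta> Suc by (cases \<beta>) auto
    qed (use N in simp)
    show ?thesis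
    proof (intro allI impI)
      fix n assume n: "n \<ge> N"
      obtain \<beta> where \<beta>: "ns (Suc n) = \<beta> # ns n" "stt (ns (Suc n)) = trans (stt (ns n)) \<beta>"
        using T_step[OF P] by blast
      have sn: "stt (ns n) = SR" using A[of "n - N"] n by simp
      have "stt (ns (Suc n)) \<noteq> SE" using N0[of "Suc n"] N n by simp
      then have "\<beta> = False" using \<beta> sn by (cases \<beta>) auto
      then show "stt (ns n) = SR \<and> ns (Suc n) = False # ns n" using sn \<beta> by simp
    qed
  qed
  have stayIv: "\<forall>n\<ge>N. stt (ns n) = SIv" if N: "stt (ns N) = SIv" for N
  proof (intro allI impI)
    fix n assume "n \<ge> N"
    then show "stt (ns n) = SIv" using SIv_stay[OF P N, of "n - N"] by simp
  qed
  have notSIR: False if N: "N \<ge> N0" "stt (ns N) = SIR" for N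
  proof -
    obtain \<beta> where \<beta>: "stt (ns (Suc N)) = trans (stt (ns N)) \<beta>" using T_step[OF P] by blast
    show False
    proof (cases \<beta>)
      case True
      then have "stt (ns (Suc N)) = SR" using \<beta> N by simp
      moreover have "Suc N \<ge> N0" using N by simp
      ultimately have "\<forall>n\<ge>Suc N. stt (ns n) = SR \<and> ns (Suc n) = False # ns n" using stayR by blast
      then show False using n4 by blast
    next
      case False
      then have "stt (ns (Suc N)) = SIv" using \<beta> N by simp
      then have "\<forall>n\<ge>Suc N. stt (ns n) = SIv" using stayIv by blast
      then show False using n2 by blast
    qed
  qed
  show False
  proof (cases "stt (ns N0)")
    case SE then show False using N0[of N0] by simp
  next
    case SL then have "\<forall>n\<ge>N0. stt (ns n) = SL \<and> ns (Suc n) = True # ns n" using stayL by blast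
    then show False using n3 by blast
  next
    case SR then have "\<forall>n\<ge>N0. stt (ns n) = SR \<and> ns (Suc n) = False # ns n" using stayR by blast
    then show False using n4 by blast
  next
    case SIR then show False using notSIR[of N0] by simp
  next
    case SIv then have "\<forall>n\<ge>N0. stt (ns n) = SIv" using stayIv by blast
    then show False using n2 by blast
  qed
qed

end

context mcv begin

lemma Cv_at: "stt l = SE \<or> stt l = SL \<or> stt l = SR \<Longrightarrow> Cv (aM l) (bM l)"
  using pm_inv[of l] by (auto simp: InvM_def)

lemma cut_SE: "stt l = SE \<Longrightarrow> cM l = clo (rq (kE (aM l) (bM l))) \<and> dM l = clo (rq (kE (aM l) (bM l)))"
  by (simp add: cM_def dM_def cutM_def)
lemma cut_SIR: "stt l = SIR \<Longrightarrow> dM l = chi (aM l)"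
  by (simp add: dM_def cutM_def)
lemma cut_SL: "stt l = SL \<Longrightarrow> cM l = gapl M (rq (kL (aM l) (bM l))) \<and> dM l = gapr M (rq (kL (aM l) (bM l)))"
  by (simp add: cM_def dM_def cutM_def)
lemma cut_SR: "stt l = SR \<Longrightarrow> cM l = gapl M (rq (kR (aM l) (bM l))) \<and> dM l = gapr M (rq (kR (aM l) (bM l)))"
  by (simp add: cM_def dM_def cutM_def)

lemma M_shrink:
  assumes P: "is_path ns"
  shows "(\<lambda>n. bM (ns n) - aM (ns n)) \<longlonglongrightarrow> 0"
proof -
  have T: "tree_ok M aM bM cM dM" by (rule M_tree_ok)
  obtain al be where L: "(\<lambda>n. aM (ns n)) \<longlonglongrightarrow> al" "(\<lambda>n. bM (ns n)) \<longlonglongrightarrow> be" "\<And>n. aM (ns n) \<le> al"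
    "\<And>n. be \<le> bM (ns n)" "al \<le> be" "al \<in> M" "be \<in> M"
    using path_limits[OF T P M_closed] by blast
  have amono: "n \<le> m \<Longrightarrow> aM (ns n) \<le> aM (ns m)" for n m using tree_inc[OF T P] by (simp add: incseq_def)
  have bmono: "n \<le> m \<Longrightarrow> bM (ns m) \<le> bM (ns n)" for n m using tree_dec[OF T P] by (simp add: decseq_def)
  have "al = be"
  proof (rule ccontr)
    assume "al \<noteq> be"
    then have ab: "al < be" using L(5) by simp
    have lb: "\<And>n. bM (ns n) - aM (ns n) \<ge> be - al" using L(3,4) by (smt (verit))
    have pos: "be - al > 0" using ab by simp
    from dichotomy[OF P]
    consider (SEinf) "\<forall>N. \<exists>n\<ge>N. stt (ns n) = SE" | (Iv) "\<exists>N. \<forall>n\<ge>N. stt (ns n) = SIv"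
      | (Lc) "\<exists>N. \<forall>n\<ge>N. stt (ns n) = SL \<and> ns (Suc n) = True # ns n"
      | (Rc) "\<exists>N. \<forall>n\<ge>N. stt (ns n) = SR \<and> ns (Suc n) = False # ns n" by blast
    then show False
    proof cases
      case Iv
      then obtain N where N: "\<And>n. n \<ge> N \<Longrightarrow> stt (ns n) = SIv" by blast
      show False
      proof (rule halving_contra[OF _ lb pos])
        fix n assume n: "n \<ge> N"
        obtain \<beta> where \<beta>: "ns (Suc n) = \<beta> # ns n" using P by (rule path_step)
        have mc: "cM (ns n) = (aM (ns n) + bM (ns n))/2 \<and> dM (ns n) = (aM (ns n) + bM (ns n))/2"
          using mid_cut N[OF n] by blast
        show "bM (ns (Suc n)) - aM (ns (Suc n)) \<le> (bM (ns n) - aM (ns n)) / 2"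
          using \<beta> mc tree_facts(7-10)[OF T, where s="ns n"] by (cases \<beta>) (auto simp: field_simps)
      qed
    next
      case Lc
      then obtain N where N: "\<And>n. n \<ge> N \<Longrightarrow> stt (ns n) = SL \<and> ns (Suc n) = True # ns n" by blast
      show False
      proof (rule halving_contra[OF _ lb pos])
        fix n assume n: "n \<ge> N"
        define l where "l = ns n"
        have sl: "stt l = SL" and nx: "ns (Suc n) = True # l" using N[OF n] by (auto simp: l_def)
        have C: "Cv (aM l) (bM l)" using Cv_at sl by blast
        define r where "r = rq (kL (aM l) (bM l))"
        have r: "(aM l + bM l)/2 < r" "r < bM l" "r \<notin> M" using kL_props[OF C] by (simp_all add: r_def)
        have ar: "aM l < r" using r C by (auto simp: Cv_def)
        have "r < gapr M r" using gap_split(4)[OF C ar r(2,3)] .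
        moreover have "aM (ns (Suc n)) = gapr M r" "bM (ns (Suc n)) = bM l"
          using nx tree_facts(9,10)[OF T, where s=l] cut_SL[OF sl] by (simp_all add: r_def)
        ultimately show "bM (ns (Suc n)) - aM (ns (Suc n)) \<le> (bM (ns n) - aM (ns n)) / 2"
          using r(1) l_def by (simp add: field_simps)
      qed
    next
      case Rc
      then obtain N where N: "\<And>n. n \<ge> N \<Longrightarrow> stt (ns n) = SR \<and> ns (Suc n) = False # ns n" by blast
      show False
      proof (rule halving_contra[OF _ lb pos])
        fix n assume n: "n \<ge> N"
        define l where "l = ns n"
        have sl: "stt l = SR" and nx: "ns (Suc n) = False # l" using N[OF n] by (auto simp: l_def)
        have C: "Cv (aM l) (bM l)" using Cv_at sl by blast
        define r where "r = rq (kR (aM l) (bM l))"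
        have r: "aM l < r" "r < (aM l + bM l)/2" "r \<notin> M" using kR_props[OF C] by (simp_all add: r_def)
        have rb: "r < bM l" using r C by (auto simp: Cv_def)
        have "gapl M r < r" using gap_split(3)[OF C r(1) rb r(3)] .
        moreover have "aM (ns (Suc n)) = aM l" "bM (ns (Suc n)) = gapl M r"
          using nx tree_facts(7,8)[OF T, where s=l] cut_SR[OF sl] by (simp_all add: r_def)
        ultimately show "bM (ns (Suc n)) - aM (ns (Suc n)) \<le> (bM (ns n) - aM (ns n)) / 2"
          using r(2) l_def by (simp add: field_simps)
      qed
    next
      case SEinf
      show False
      proof (cases "\<exists>y. al < y \<and> y < be \<and> y \<in> interior M")
        case True
        then obtain y where y: "al < y" "y < be" "y \<in> interior M" by blast
        have op: "open ({al<..<be} \<inter> interior M)" by auto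
        have "y \<in> {al<..<be} \<inter> interior M" using y by auto
        then obtain j where j: "rq j \<in> {al<..<be} \<inter> interior M" using rq_open[OF op] by blast
        define I where "I = {n. stt (ns n) = SE}"
        have infI: "infinite I" unfolding I_def infinite_nat_iff_unbounded_le using SEinf by blast
        define k where "k n = kE (aM (ns n)) (bM (ns n))" for n
        have kle: "k n \<le> j" if n: "n \<in> I" for n
        proof -
          have C: "Cv (aM (ns n)) (bM (ns n))" using Cv_at n by (auto simp: I_def)
          show ?thesis unfolding k_def
            by (rule kE_props(4)[OF C]) (use j L(3,4)[of n] in auto)
        qed
        have dist: "k n \<noteq> k m" if nm: "n \<in> I" "m \<in> I" "n < m" for n m
        proof -
          define l where "l = ns n"
          have sl: "stt l = SE" using nm by (simp add: I_def l_def)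
          have C: "Cv (aM l) (bM l)" using Cv_at sl by blast
          define r where "r = rq (k n)"
          have r: "aM l < r" "r < bM l" "r \<in> interior M" using kE_props[OF C] by (simp_all add: r_def k_def l_def)
          have cr: "clo r < r" "{clo r..r} \<subseteq> M" using clo_props[OF r(3)] by auto
          have rch: "r < chi r" using chi_props(1)[OF r(3)] .
          have cl: "cM l = clo r" "dM l = clo r" using cut_SE[OF sl] by (simp_all add: r_def k_def l_def)
          obtain \<beta> where \<beta>: "ns (Suc n) = \<beta> # l" "stt (ns (Suc n)) = trans SE \<beta>"
            using T_step[OF P, of n] sl l_def by auto
          have excl: "r < aM (ns m) \<or> bM (ns m) < r"
          proof (cases \<beta>)
            case False
            then have "bM (ns (Suc n)) = clo r" using \<beta> tree_facts(8)[OF T, where s=l] cl by simp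
            then have "bM (ns m) < r" using bmono[of "Suc n" m] nm cr by simp
            then show ?thesis by simp
          next
            case True
            then have s1: "stt (ns (Suc n)) = SIR" using \<beta> by simp
            have a1: "aM (ns (Suc n)) = clo r" using True \<beta> tree_facts(9)[OF T, where s=l] cl by simp
            have "m \<noteq> Suc n" using s1 nm by (auto simp: I_def)
            then have m2: "Suc (Suc n) \<le> m" using nm by simp
            obtain \<gamma> where \<gamma>: "ns (Suc (Suc n)) = \<gamma> # ns (Suc n)" "stt (ns (Suc (Suc n))) = trans SIR \<gamma>"
              using T_step[OF P, of "Suc n"] s1 by auto
            have "\<gamma> = True"
            proof (rule ccontr)
              assume "\<gamma> \<noteq> True"
              then have "stt (ns (Suc (Suc n))) = SIv" using \<gamma> by simp
              then have "stt (ns (Suc (Suc n) + (m - Suc (Suc n)))) = SIv" by (rule SIv_stay[OF P])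
              moreover have "Suc (Suc n) + (m - Suc (Suc n)) = m" using m2 by simp
              ultimately have "stt (ns m) = SIv" by (simp only:)
              then show False using nm by (simp add: I_def)
            qed
            then have "aM (ns (Suc (Suc n))) = dM (ns (Suc n))" using \<gamma> tree_facts(9)[OF T, where s="ns (Suc n)"] by simp
            also have "\<dots> = chi (clo r)" using cut_SIR[OF s1] a1 by simp
            also have "\<dots> = chi r" using chi_eq[of "clo r" r] cr by simp
            finally have "r < aM (ns (Suc (Suc n)))" using rch by simp
            then have "r < aM (ns m)" using amono[OF m2] by simp
            then show ?thesis by simp
          qed
          have Cm: "Cv (aM (ns m)) (bM (ns m))" using Cv_at nm by (auto simp: I_def)
          have "aM (ns m) < rq (k m)" "rq (k m) < bM (ns m)" using kE_props(1,2)[OF Cm] by (simp_all add: k_def)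
          then show ?thesis using excl r_def by auto
        qed
        show False by (rule rank_contra[OF infI kle dist])
      next
        case False
        then have noI: "\<And>y. al < y \<Longrightarrow> y < be \<Longrightarrow> y \<notin> interior M" by blast
        have noM: "z \<notin> M" if z: "al < z" "z < be" for z
        proof
          assume zM: "z \<in> M"
          obtain y where "y \<in> interior M" "\<bar>y - z\<bar> < min (z - al) (be - z)" using P1[OF zM, of "min (z - al) (be - z)"] z by auto
          then show False using noI[of y] by auto
        qed
        obtain j1 where j1: "(al + 3*be)/4 < rq j1" "rq j1 < be" using rq_dense[of "(al + 3*be)/4" be] ab by auto
        obtain j2 where j2: "al < rq j2" "rq j2 < (3*al + be)/4" using rq_dense[of al "(3*al + be)/4"] ab by auto
        have j1M: "rq j1 \<notin> M" using j1 noM[of "rq j1"] ab by auto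
        have j2M: "rq j2 \<notin> M" using j2 noM[of "rq j2"] ab by auto
        have midlim: "(\<lambda>n. (aM (ns n) + bM (ns n))/2) \<longlonglongrightarrow> (al + be)/2"
          using L(1,2) by (auto intro!: tendsto_intros)
        have ev: "\<forall>\<^sub>F n in sequentially. (3*al + be)/4 < (aM (ns n) + bM (ns n))/2 \<and> (aM (ns n) + bM (ns n))/2 < (al + 3*be)/4"
          using order_tendstoD[OF midlim, of "(3*al + be)/4"] order_tendstoD[OF midlim, of "(al + 3*be)/4"] ab
          by (auto intro: eventually_conj)
        then obtain N0 where N0: "\<And>n. n \<ge> N0 \<Longrightarrow> (3*al + be)/4 < (aM (ns n) + bM (ns n))/2 \<and> (aM (ns n) + bM (ns n))/2 < (al + 3*be)/4"
          unfolding eventually_sequentially by blast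
        define I where "I = {n. n \<ge> N0 \<and> (stt (ns n) = SL \<or> stt (ns n) = SR)}"
        have infI: "infinite I" unfolding infinite_nat_iff_unbounded_le
        proof
          fix m0
          obtain n where n: "n \<ge> max m0 N0" "stt (ns n) = SE" using SEinf by blast
          obtain \<beta> where \<beta>: "stt (ns (Suc n)) = trans SE \<beta>" using T_step[OF P, of n] n by auto
          show "\<exists>n\<ge>m0. n \<in> I"
          proof (cases \<beta>)
            case False
            then have "Suc n \<in> I" using \<beta> n by (auto simp: I_def)
            then show ?thesis using n by (intro exI[of _ "Suc n"]) auto
          next
            case True
            then have s1: "stt (ns (Suc n)) = SIR" using \<beta> by simp
            obtain \<gamma> where \<gamma>: "stt (ns (Suc (Suc n))) = trans SIR \<gamma>" using T_step[OF P, of "Suc n"] s1 by auto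
            have "\<gamma> = True"
            proof (rule ccontr)
              assume "\<gamma> \<noteq> True"
              then have s2: "stt (ns (Suc (Suc n))) = SIv" using \<gamma> by simp
              obtain n' where n': "n' \<ge> Suc (Suc n)" "stt (ns n') = SE" using SEinf by blast
              have "stt (ns (Suc (Suc n) + (n' - Suc (Suc n)))) = SIv" by (rule SIv_stay[OF P s2])
              moreover have "Suc (Suc n) + (n' - Suc (Suc n)) = n'" using n' by simp
              ultimately have "stt (ns n') = SIv" by (simp only:)
              then show False using n' by simp
            qed
            then have "Suc (Suc n) \<in> I" using \<gamma> n by (auto simp: I_def)
            then show ?thesis using n by (intro exI[of _ "Suc (Suc n)"]) auto
          qed
        qed
        define k where "k n = (if stt (ns n) = SL then kL (aM (ns n)) (bM (ns n)) else kR (aM (ns n)) (bM (ns n)))" for n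
        have kle: "k n \<le> max j1 j2" if n: "n \<in> I" for n
        proof -
          have n0: "n \<ge> N0" and st: "stt (ns n) = SL \<or> stt (ns n) = SR" using n by (auto simp: I_def)
          have C: "Cv (aM (ns n)) (bM (ns n))" using Cv_at st by blast
          have mid: "(3*al + be)/4 < (aM (ns n) + bM (ns n))/2" "(aM (ns n) + bM (ns n))/2 < (al + 3*be)/4"
            using N0[OF n0] by auto
          show ?thesis
          proof (cases "stt (ns n) = SL")
            case True
            have "kL (aM (ns n)) (bM (ns n)) \<le> j1"
              by (rule kL_props(4)[OF C]) (use j1 j1M mid L(4)[of n] in auto)
            then show ?thesis using True by (simp add: k_def)
          next
            case False
            have "kR (aM (ns n)) (bM (ns n)) \<le> j2"
              by (rule kR_props(4)[OF C]) (use j2 j2M mid L(3)[of n] in auto)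
            then show ?thesis using False by (simp add: k_def)
          qed
        qed
        have inside: "aM (ns n) < rq (k n) \<and> rq (k n) < bM (ns n) \<and> cM (ns n) < rq (k n) \<and> rq (k n) < dM (ns n)"
          if n: "n \<in> I" for n
        proof -
          have st: "stt (ns n) = SL \<or> stt (ns n) = SR" using n by (auto simp: I_def)
          have C: "Cv (aM (ns n)) (bM (ns n))" using Cv_at st by blast
          have ab': "aM (ns n) < bM (ns n)" using C by (simp add: Cv_def)
          show ?thesis
          proof (cases "stt (ns n) = SL")
            case True
            define r where "r = rq (kL (aM (ns n)) (bM (ns n)))"
            have r: "(aM (ns n) + bM (ns n))/2 < r" "r < bM (ns n)" "r \<notin> M" using kL_props[OF C] by (simp_all add: r_def)
            have ar: "aM (ns n) < r" using r(1) ab' by simp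
            note G = gap_split[OF C ar r(2,3)]
            show ?thesis using True ar r G(3,4) cut_SL[OF True] by (simp add: k_def r_def)
          next
            case False
            then have sr: "stt (ns n) = SR" using st by simp
            define r where "r = rq (kR (aM (ns n)) (bM (ns n)))"
            have r: "aM (ns n) < r" "r < (aM (ns n) + bM (ns n))/2" "r \<notin> M" using kR_props[OF C] by (simp_all add: r_def)
            have rb: "r < bM (ns n)" using r(2) ab' by simp
            note G = gap_split[OF C r(1) rb r(3)]
            show ?thesis using False r rb G(3,4) cut_SR[OF sr] by (simp add: k_def r_def)
          qed
        qed
        have dist: "k n \<noteq> k m" if nm: "n \<in> I" "m \<in> I" "n < m" for n m
        proof -
          have "rq (k n) < aM (ns m) \<or> bM (ns m) < rq (k n)"
            using path_excl[OF T P nm(3)] inside[OF nm(1)] by blast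
          then show ?thesis using inside[OF nm(2)] by auto
        qed
        show False by (rule rank_contra[OF infI kle dist])
      qed
    qed
  qed
  have "(\<lambda>n. bM (ns n) - aM (ns n)) \<longlonglongrightarrow> be - al" by (intro tendsto_diff L(1,2))
  then show ?thesis using \<open>al = be\<close> by simp
qed

lemma M_tree: "is_tree M aM bM cM dM"
  unfolding is_tree_def
proof (intro conjI allI impI)
  show "M \<subseteq> {aM []..bM []}" using compact_inf_sup[OF M_compact M_ne] by (auto simp: aM_def bM_def)
  show "tree_ok M aM bM cM dM" by (rule M_tree_ok)
  show "\<And>ns. is_path ns \<Longrightarrow> (\<lambda>n. bM (ns n) - aM (ns n)) \<longlonglongrightarrow> 0" by (rule M_shrink)
qed

lemma M_cut_iff: "cM l = dM l \<longleftrightarrow> stt l \<noteq> SL \<and> stt l \<noteq> SR"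
proof (cases "stt l")
  case SL
  have C: "Cv (aM l) (bM l)" using Cv_at SL by blast
  define r where "r = rq (kL (aM l) (bM l))"
  have r: "(aM l + bM l)/2 < r" "r < bM l" "r \<notin> M" using kL_props[OF C] by (simp_all add: r_def)
  have ar: "aM l < r" using r(1) C by (auto simp: Cv_def)
  note G = gap_split[OF C ar r(2,3)]
  show ?thesis using SL G(3,4) cut_SL[OF SL] by (simp add: r_def)
next
  case SR
  have C: "Cv (aM l) (bM l)" using Cv_at SR by blast
  define r where "r = rq (kR (aM l) (bM l))"
  have r: "aM l < r" "r < (aM l + bM l)/2" "r \<notin> M" using kR_props[OF C] by (simp_all add: r_def)
  have rb: "r < bM l" using r(2) C by (auto simp: Cv_def)
  note G = gap_split[OF C r(1) rb r(3)]
  show ?thesis using SR G(3,4) cut_SR[OF SR] by (simp add: r_def)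
qed (simp_all add: cM_def dM_def cutM_def)

theorem M_homeomorphic_GN: "M homeomorphic GN"
proof (rule tree_homeomorphic[OF M_tree GN_tree])
  show "\<And>s. cM s = dM s \<longleftrightarrow> cG s = dG s" using M_cut_iff GN_cut_iff by simp
  show "compact M" by (rule M_compact)
  show "compact GN" by (rule GN_compact)
qed

end

lemma realizable_A: "summable (\<lambda>n. norm (x n)) \<Longrightarrow> achievement_set x homeomorphic S \<Longrightarrow> realizable_in_plane (S::real set)"
  for x :: "nat \<Rightarrow> real"
  using realizable_line realizable_hom by blast

lemma realizable_AB:
  fixes x y :: "nat \<Rightarrow> real" and S T :: "real set"
  assumes "summable (\<lambda>n. norm (x n))" "summable (\<lambda>n. norm (y n))"
    "achievement_set x homeomorphic S" "achievement_set y homeomorphic T"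
  shows "realizable_in_plane (S \<times> T)"
  using realizable_prod[OF assms(1,2)] homeomorphic_Times'[OF assms(3,4)] realizable_hom by blast

theorem proposition3p1:
  fixes C M :: "real set" and p :: real
  assumes "cantor_set C" and "m_cantorval M"
  shows "realizable_in_plane {p}
       \<and> realizable_in_plane {0..1::real}
       \<and> realizable_in_plane C
       \<and> realizable_in_plane M
       \<and> realizable_in_plane ({0..1::real} \<times> {0..1::real})
       \<and> realizable_in_plane ({0..1::real} \<times> C)
       \<and> realizable_in_plane ({0..1::real} \<times> M)
       \<and> realizable_in_plane (C \<times> M)
       \<and> realizable_in_plane (M \<times> M)"
proof -
  interpret mcv M by (rule mcv.intro[OF assms(2)])
  have I: "achievement_set v2 homeomorphic {0..1::real}" unfolding A2_eq by (rule homeomorphic_refl)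
  have Cc: "achievement_set v3 homeomorphic C"
    by (subst homeomorphic_sym) (rule cantor_homeomorphic_A3[OF assms(1), unfolded A3_def])
  have Mm: "achievement_set vg homeomorphic M"
    by (subst homeomorphic_sym) (rule M_homeomorphic_GN[unfolded GN_def])
  have z: "summable (\<lambda>n. norm ((\<lambda>n. 0::real) n))" by simp
  have P: "achievement_set (\<lambda>n. 0::real) homeomorphic {p}"
    unfolding zero_seq_ach by (simp add: homeomorphic_finite)
  show ?thesis
    using realizable_A[OF z P] realizable_A[OF v2_summable I] realizable_A[OF v3_summable Cc]
      realizable_A[OF vg_summable Mm] realizable_AB[OF v2_summable v2_summable I I]
      realizable_AB[OF v2_summable v3_summable I Cc] realizable_AB[OF v2_summable vg_summable I Mm]
      realizable_AB[OF v3_summable vg_summable Cc Mm] realizable_AB[OF vg_summable vg_summable Mm Mm]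
    by blast
qed

end
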